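(* Let $\partial_1,\partial_2$ be nonzero homogeneous locally nilpotent derivations of fiber type on $A$ with degrees $e_1,e_2\in M$, and suppose $e_1+e_2\notin\omega_M$. Then the Lie algebra $L\subseteq\operatorname{Der}(A)$ generated over $\mathbf k$ by $\partial_1$ and $\partial_2$ is finite dimensional, and every element of $L$ is a locally nilpotent derivation.
   Context: Let $\mathbf k$ be an algebraically closed field of characteristic zero, $\mathbb T\cong(\mathbf k^\times)^n$ an algebraic torus with character lattice $M$. Let $X$ be a normal affine variety with an effective $\mathbb T$-action, $A=\mathbf k[X]$ with the induced grading $A=\bigoplus_{m\in\omega_M}A_m\chi^m$, $A_m\subseteq\mathbf k(X)^{\mathbb T}$, where the weight cone $\omega\subseteq M\otimes\mathbb Q$ is the cone spanned by $\{m:A_m\ne0\}$ and $\omega_M=\omega\cap M$; $K=\operatorname{Frac}A$. A derivation $\partial$ of $A$ is homogeneous of degree $e\in M$ if $\partial(A_m\chi^m)\subseteq A_{m+e}\chi^{m+e}$ for all $m$; it is locally nilpotent if every element of $A$ is killed by some power of $\partial$; a homogeneous locally nilpotent derivation is of fiber type if its unique extension to $K$ annihilates $\mathbf k(X)^{\mathbb T}$. *)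

theory Defs
  imports "HOL-Library.Function_Algebras" "HOL-Computational_Algebra.Polynomial" "HOL-Computational_Algebra.Fraction_Field"
begin

definition alg_closed_field :: "'k::field itself \<Rightarrow> bool" where
  "alg_closed_field _ \<longleftrightarrow> (\<forall>p :: 'k poly. degree p > 0 \<longrightarrow> (\<exists>x. poly p x = 0))"

section \<open>The k-algebra A (an integral domain 'a with structure map iota : k -> A)\<close>

definition k_algebra_map :: "('k::field \<Rightarrow> 'a::idom) \<Rightarrow> bool" where
  "k_algebra_map \<iota> \<longleftrightarrow> inj \<iota> \<and> \<iota> 0 = 0 \<and> \<iota> 1 = 1 \<and>
     (\<forall>x y. \<iota> (x + y) = \<iota> x + \<iota> y) \<and> (\<forall>x y. \<iota> (x * y) = \<iota> x * \<iota> y)"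

inductive_set subalg_gen :: "('k \<Rightarrow> 'a::comm_ring_1) \<Rightarrow> 'a set \<Rightarrow> 'a set"
  for \<iota> :: "'k \<Rightarrow> 'a" and G :: "'a set" where
  gen: "g \<in> G \<Longrightarrow> g \<in> subalg_gen \<iota> G"
| const: "\<iota> c \<in> subalg_gen \<iota> G"
| add: "x \<in> subalg_gen \<iota> G \<Longrightarrow> y \<in> subalg_gen \<iota> G \<Longrightarrow> x + y \<in> subalg_gen \<iota> G"
| mult: "x \<in> subalg_gen \<iota> G \<Longrightarrow> y \<in> subalg_gen \<iota> G \<Longrightarrow> x * y \<in> subalg_gen \<iota> G"

definition finitely_generated :: "('k \<Rightarrow> 'a::comm_ring_1) \<Rightarrow> bool" where
  "finitely_generated \<iota> \<longleftrightarrow> (\<exists>G. finite G \<and> (\<forall>a. a \<in> subalg_gen \<iota> G))"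

definition integrally_closed :: "'a::idom itself \<Rightarrow> bool" where
  "integrally_closed _ \<longleftrightarrow>
     (\<forall>x :: 'a fract. (\<exists>p :: 'a poly. lead_coeff p = 1 \<and>
          poly (map_poly (\<lambda>a. Fract a 1) p) x = 0) \<longrightarrow> (\<exists>a. x = Fract a 1))"

section \<open>Gradings by the character lattice M = ('n => int), 'n finite\<close>

definition M_graded :: "('k::field \<Rightarrow> 'a::idom) \<Rightarrow> (('n::finite \<Rightarrow> int) \<Rightarrow> 'a set) \<Rightarrow> bool" where
  "M_graded \<iota> Am \<longleftrightarrow>
     (\<forall>m. 0 \<in> Am m \<and> (\<forall>x\<in>Am m. \<forall>y\<in>Am m. x + y \<in> Am m) \<and> (\<forall>c. \<forall>x\<in>Am m. \<iota> c * x \<in> Am m)) \<and>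
     (\<forall>m m' x y. x \<in> Am m \<longrightarrow> y \<in> Am m' \<longrightarrow> x * y \<in> Am (m + m')) \<and>
     range \<iota> \<subseteq> Am 0 \<and>
     (\<forall>a. \<exists>!c. finite {m. c m \<noteq> 0} \<and> (\<forall>m. c m \<in> Am m) \<and>
              a = (\<Sum>m\<in>{m. c m \<noteq> 0}. c m))"

definition hcomp :: "(('n::finite \<Rightarrow> int) \<Rightarrow> 'a::comm_ring_1 set) \<Rightarrow> 'a \<Rightarrow> ('n \<Rightarrow> int) \<Rightarrow> 'a" where
  "hcomp Am a = (THE c. finite {m. c m \<noteq> 0} \<and> (\<forall>m. c m \<in> Am m) \<and> a = (\<Sum>m\<in>{m. c m \<noteq> 0}. c m))"

definition weights :: "(('n::finite \<Rightarrow> int) \<Rightarrow> 'a::zero set) \<Rightarrow> ('n \<Rightarrow> int) set" where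
  "weights Am = {m. Am m \<noteq> {0}}"

text \<open>omega_M = (cone in M tensor Q spanned by the weights) intersected with M.\<close>
definition weight_cone_M :: "(('n::finite \<Rightarrow> int) \<Rightarrow> 'a::zero set) \<Rightarrow> ('n \<Rightarrow> int) set" where
  "weight_cone_M Am = {m. \<exists>F c. finite F \<and> F \<subseteq> weights Am \<and> (\<forall>s\<in>F. c s \<ge> (0::rat)) \<and>
        (\<lambda>i. of_int (m i)) = (\<lambda>i. \<Sum>s\<in>F. c s * of_int (s i))}"

text \<open>Effectiveness of the torus action: the weights generate M as a group.\<close>
definition effective_grading :: "(('n::finite \<Rightarrow> int) \<Rightarrow> 'a::zero set) \<Rightarrow> bool" where
  "effective_grading Am \<longleftrightarrow> (\<forall>m. \<exists>F c. finite F \<and> F \<subseteq> weights Am \<and>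
        m = (\<lambda>i. \<Sum>s\<in>F. c s * s i))"

section \<open>Torus T = ('n => k^*) acting on A via the grading, and on K = Frac A\<close>

definition character :: "('n::finite \<Rightarrow> int) \<Rightarrow> ('n \<Rightarrow> 'k::field) \<Rightarrow> 'k" where
  "character m t = (\<Prod>i\<in>UNIV. t i powi m i)"

definition torus_act :: "('k::field \<Rightarrow> 'a::comm_ring_1) \<Rightarrow> (('n::finite \<Rightarrow> int) \<Rightarrow> 'a set) \<Rightarrow>
     ('n \<Rightarrow> 'k) \<Rightarrow> 'a \<Rightarrow> 'a" where
  "torus_act \<iota> Am t a = (\<Sum>m\<in>{m. hcomp Am a m \<noteq> 0}. \<iota> (character m t) * hcomp Am a m)"

definition invariant_field :: "('k::field \<Rightarrow> 'a::idom) \<Rightarrow> (('n::finite \<Rightarrow> int) \<Rightarrow> 'a set) \<Rightarrow> 'a fract set" where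
  "invariant_field \<iota> Am = {x. \<forall>t. (\<forall>i. t i \<noteq> 0) \<longrightarrow>
      (\<forall>a b. b \<noteq> 0 \<longrightarrow> x = Fract a b \<longrightarrow> Fract (torus_act \<iota> Am t a) (torus_act \<iota> Am t b) = x)}"

definition is_derivation :: "('k \<Rightarrow> 'a::comm_ring_1) \<Rightarrow> ('a \<Rightarrow> 'a) \<Rightarrow> bool" where
  "is_derivation \<iota> D \<longleftrightarrow> (\<forall>x y. D (x + y) = D x + D y) \<and> (\<forall>c x. D (\<iota> c * x) = \<iota> c * D x) \<and>
     (\<forall>x y. D (x * y) = x * D y + D x * y)"

definition locally_nilpotent :: "('a::zero \<Rightarrow> 'a) \<Rightarrow> bool" where
  "locally_nilpotent D \<longleftrightarrow> (\<forall>a. \<exists>n. (D ^^ n) a = 0)"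

definition homogeneous_of_degree :: "(('n \<Rightarrow> int) \<Rightarrow> 'a set) \<Rightarrow> ('a \<Rightarrow> 'a) \<Rightarrow> ('n \<Rightarrow> int) \<Rightarrow> bool" where
  "homogeneous_of_degree Am D e \<longleftrightarrow> (\<forall>m a. a \<in> Am m \<longrightarrow> D a \<in> Am (m + e))"

definition fract_ext :: "('a::idom \<Rightarrow> 'a) \<Rightarrow> 'a fract \<Rightarrow> 'a fract" where
  "fract_ext D = (THE D'. (\<forall>x y. D' (x + y) = D' x + D' y) \<and> (\<forall>x y. D' (x * y) = x * D' y + D' x * y) \<and>
                         (\<forall>a. D' (Fract a 1) = Fract (D a) 1))"

definition fiber_type :: "('k::field \<Rightarrow> 'a::idom) \<Rightarrow> (('n::finite \<Rightarrow> int) \<Rightarrow> 'a set) \<Rightarrow> ('a \<Rightarrow> 'a) \<Rightarrow> bool" where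
  "fiber_type \<iota> Am D \<longleftrightarrow> (\<forall>x\<in>invariant_field \<iota> Am. fract_ext D x = 0)"

inductive_set lie_gen :: "('k \<Rightarrow> 'a::comm_ring_1) \<Rightarrow> ('a \<Rightarrow> 'a) \<Rightarrow> ('a \<Rightarrow> 'a) \<Rightarrow> ('a \<Rightarrow> 'a) set"
  for \<iota> :: "'k \<Rightarrow> 'a" and D1 D2 :: "'a \<Rightarrow> 'a" where
  gen1: "D1 \<in> lie_gen \<iota> D1 D2"
| gen2: "D2 \<in> lie_gen \<iota> D1 D2"
| add: "D \<in> lie_gen \<iota> D1 D2 \<Longrightarrow> E \<in> lie_gen \<iota> D1 D2 \<Longrightarrow> (\<lambda>x. D x + E x) \<in> lie_gen \<iota> D1 D2"
| smult: "D \<in> lie_gen \<iota> D1 D2 \<Longrightarrow> (\<lambda>x. \<iota> c * D x) \<in> lie_gen \<iota> D1 D2"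
| bracket: "D \<in> lie_gen \<iota> D1 D2 \<Longrightarrow> E \<in> lie_gen \<iota> D1 D2 \<Longrightarrow> (\<lambda>x. D (E x) - E (D x)) \<in> lie_gen \<iota> D1 D2"

definition finite_dim_k :: "('k \<Rightarrow> 'a::comm_ring_1) \<Rightarrow> ('a \<Rightarrow> 'a) set \<Rightarrow> bool" where
  "finite_dim_k \<iota> L \<longleftrightarrow> (\<exists>B. finite B \<and> B \<subseteq> L \<and>
     (\<forall>D\<in>L. \<exists>c. D = (\<lambda>x. \<Sum>b\<in>B. \<iota> (c b) * b x)))"

end

theory Submission
  imports Defs
begin
locale grad =
  fixes \<iota> :: "'k::field_char_0 \<Rightarrow> 'a::idom"
    and Am :: "('n::finite \<Rightarrow> int) \<Rightarrow> 'a set"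
  assumes kalg: "k_algebra_map \<iota>"
    and gr: "M_graded \<iota> Am"
begin

lemma iota_add: "\<iota> (x + y) = \<iota> x + \<iota> y" and iota_mult: "\<iota> (x * y) = \<iota> x * \<iota> y"
  and iota_0: "\<iota> 0 = 0" and iota_1: "\<iota> 1 = 1" and iota_inj: "inj \<iota>"
  using kalg unfolding k_algebra_map_def by auto

lemma iota_minus: "\<iota> (- x) = - \<iota> x"
proof -
  have "\<iota> (- x) + \<iota> x = 0" using iota_add[of "-x" x] iota_0 by simp
  thus ?thesis by (simp add: eq_neg_iff_add_eq_0)
qed

lemma iota_of_nat: "\<iota> (of_nat n) = of_nat n"
  by (induct n) (simp_all add: iota_0 iota_1 iota_add)

lemma iota_diff: "\<iota> (x - y) = \<iota> x - \<iota> y"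
  using iota_add[of x "-y"] iota_minus[of y] by simp

lemma iota_of_int: "\<iota> (of_int z) = of_int z"
proof -
  obtain a b where "z = int a - int b" by (metis int_diff_cases)
  then show ?thesis by (simp add: iota_diff iota_of_nat)
qed

lemma iota_eq_0: "\<iota> x = 0 \<longleftrightarrow> x = 0"
  using iota_inj iota_0 by (metis injD)

lemma of_int_a_inj: "(of_int z :: 'a) = 0 \<longleftrightarrow> z = 0"
  using iota_eq_0[of "of_int z"] by (simp add: iota_of_int)

lemma zero_in: "0 \<in> Am m"
  and add_in: "x \<in> Am m \<Longrightarrow> y \<in> Am m \<Longrightarrow> x + y \<in> Am m"
  and smult_in: "x \<in> Am m \<Longrightarrow> \<iota> c * x \<in> Am m"
  and mult_in: "x \<in> Am m \<Longrightarrow> y \<in> Am m' \<Longrightarrow> x * y \<in> Am (m + m')"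
  and iota_in: "\<iota> c \<in> Am 0"
  using gr unfolding M_graded_def by auto

lemma decomp_ex1: "\<exists>!c. finite {m. c m \<noteq> 0} \<and> (\<forall>m. c m \<in> Am m) \<and> a = (\<Sum>m\<in>{m. c m \<noteq> 0}. c m)"
  using gr unfolding M_graded_def by auto

lemma neg_in: "x \<in> Am m \<Longrightarrow> - x \<in> Am m"
  using smult_in[of x m "-1"] by (simp add: iota_minus iota_1)

lemma diff_in: "x \<in> Am m \<Longrightarrow> y \<in> Am m \<Longrightarrow> x - y \<in> Am m"
  using add_in neg_in by (metis diff_conv_add_uminus)

lemma one_in: "1 \<in> Am 0" using iota_in[of 1] iota_1 by simp

lemma intmult_in: "x \<in> Am m \<Longrightarrow> of_int z * x \<in> Am m"
  using smult_in[of x m "of_int z"] by (simp add: iota_of_int)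

lemma sum_in: "finite S \<Longrightarrow> (\<And>i. i \<in> S \<Longrightarrow> f i \<in> Am m) \<Longrightarrow> sum f S \<in> Am m"
  by (induct S rule: finite_induct) (auto intro: zero_in add_in)

lemma hcomp_prop: "finite {m. hcomp Am a m \<noteq> 0} \<and> (\<forall>m. hcomp Am a m \<in> Am m) \<and>
      a = (\<Sum>m\<in>{m. hcomp Am a m \<noteq> 0}. hcomp Am a m)"
  unfolding hcomp_def by (rule theI'[OF decomp_ex1])

lemma hcomp_unique:
  assumes "finite {m. c m \<noteq> 0}" "\<forall>m. c m \<in> Am m" "a = (\<Sum>m\<in>{m. c m \<noteq> 0}. c m)"
  shows "hcomp Am a = c"
  unfolding hcomp_def by (rule the1_equality[OF decomp_ex1]) (use assms in auto)

lemma hcomp_in: "hcomp Am a m \<in> Am m" using hcomp_prop by auto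
lemma hcomp_fin: "finite {m. hcomp Am a m \<noteq> 0}" using hcomp_prop by auto
lemma hcomp_sum: "a = (\<Sum>m\<in>{m. hcomp Am a m \<noteq> 0}. hcomp Am a m)" using hcomp_prop by auto

lemma hcomp_sum_superset: "finite S \<Longrightarrow> {m. hcomp Am a m \<noteq> 0} \<subseteq> S \<Longrightarrow> a = (\<Sum>m\<in>S. hcomp Am a m)"
proof -
  assume "finite S" "{m. hcomp Am a m \<noteq> 0} \<subseteq> S"
  then have "(\<Sum>m\<in>S. hcomp Am a m) = (\<Sum>m\<in>{m. hcomp Am a m \<noteq> 0}. hcomp Am a m)"
    by (intro sum.mono_neutral_right) auto
  then show ?thesis using hcomp_sum[of a] by simp
qed

lemma hcomp_of_sum:
  assumes fin: "finite I" and hz: "\<And>i. i \<in> I \<Longrightarrow> z i \<in> Am (d i)"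
  shows "hcomp Am (\<Sum>i\<in>I. z i) = (\<lambda>m. \<Sum>i\<in>{i\<in>I. d i = m}. z i)"
proof (rule hcomp_unique)
  let ?c = "\<lambda>m. \<Sum>i\<in>{i\<in>I. d i = m}. z i"
  have sub: "{m. ?c m \<noteq> 0} \<subseteq> d ` I"
  proof
    fix m assume "m \<in> {m. ?c m \<noteq> 0}"
    then have "{i\<in>I. d i = m} \<noteq> {}" by (intro notI) simp
    then show "m \<in> d ` I" by auto
  qed
  show "finite {m. ?c m \<noteq> 0}" using finite_subset[OF sub] fin by auto
  show "\<forall>m. ?c m \<in> Am m"
    using fin hz by (auto intro!: sum_in)
  have "(\<Sum>i\<in>I. z i) = (\<Sum>m\<in>d ` I. ?c m)"
    using sum.image_gen[OF fin, of z d] by simp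
  also have "\<dots> = (\<Sum>m\<in>{m. ?c m \<noteq> 0}. ?c m)"
    using sub fin by (intro sum.mono_neutral_right) auto
  finally show "(\<Sum>i\<in>I. z i) = (\<Sum>m\<in>{m. ?c m \<noteq> 0}. ?c m)" .
qed

lemma hcomp_hom: assumes "a \<in> Am m" shows "hcomp Am a = (\<lambda>m'. if m' = m then a else 0)"
proof -
  have "hcomp Am (\<Sum>i\<in>{()}. a) = (\<lambda>m'. \<Sum>i\<in>{i\<in>{()}. m = m'}. a)"
    by (rule hcomp_of_sum) (use assms in auto)
  then show ?thesis by (auto intro!: ext)
qed

lemma hcomp_zero: "hcomp Am 0 = (\<lambda>_. 0)"
  using hcomp_hom[OF zero_in[of 0]] by auto

lemma hom_unique: "a \<in> Am m \<Longrightarrow> a \<in> Am m' \<Longrightarrow> a \<noteq> 0 \<Longrightarrow> m = m'"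
proof -
  assume h: "a \<in> Am m" "a \<in> Am m'" "a \<noteq> 0"
  have "hcomp Am a m = a" using hcomp_hom[OF h(1)] by simp
  moreover have "hcomp Am a m = (if m = m' then a else 0)" using hcomp_hom[OF h(2)] by simp
  ultimately show "m = m'" using h(3) by (auto split: if_splits)
qed

lemma hcomp_add: "hcomp Am (a + b) m = hcomp Am a m + hcomp Am b m"
proof -
  let ?S = "{m. hcomp Am a m \<noteq> 0} \<union> {m. hcomp Am b m \<noteq> 0}"
  have fin: "finite ?S" using hcomp_fin by auto
  have "a + b = (\<Sum>m\<in>?S. hcomp Am a m + hcomp Am b m)"
    using hcomp_sum_superset[OF fin, of a] hcomp_sum_superset[OF fin, of b]
    by (simp add: sum.distrib)
  also have "hcomp Am \<dots> = (\<lambda>m'. \<Sum>i\<in>{i\<in>?S. i = m'}. hcomp Am a i + hcomp Am b i)"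
    by (rule hcomp_of_sum[OF fin]) (auto intro: add_in hcomp_in)
  finally show ?thesis
    by (cases "m \<in> ?S") (auto simp: Collect_conv_if)
qed

definition weight :: "('n \<Rightarrow> int) \<Rightarrow> bool" where
  "weight m \<longleftrightarrow> (\<exists>a\<in>Am m. a \<noteq> 0)"

lemma weight_iff: "weight m \<longleftrightarrow> m \<in> weights Am"
  unfolding weight_def weights_def using zero_in by auto

lemma weight_add: "weight m \<Longrightarrow> weight m' \<Longrightarrow> weight (m + m')"
proof -
  assume "weight m" "weight m'"
  then obtain a b where "a \<in> Am m" "a \<noteq> 0" "b \<in> Am m'" "b \<noteq> 0" unfolding weight_def by auto
  then have "a * b \<in> Am (m + m')" "a * b \<noteq> 0" using mult_in by auto
  then show ?thesis unfolding weight_def by blast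
qed

lemma weight_0: "weight 0"
  unfolding weight_def using one_in by (metis one_neq_zero)

lemma weightI: "a \<in> Am m \<Longrightarrow> a \<noteq> 0 \<Longrightarrow> weight m"
  unfolding weight_def by auto

lemma weight_smult: "weight m \<Longrightarrow> weight (of_nat k * m)"
proof (induct k)
  case 0
  have e: "of_nat 0 * m = 0" by (simp add: fun_eq_iff)
  show ?case using weight_0 by (simp only: e)
next
  case (Suc k)
  have e: "of_nat (Suc k) * m = m + of_nat k * m" by (simp add: algebra_simps)
  show ?case using weight_add[of m "of_nat k * m"] Suc by (simp only: e)
qed

lemma weight_sum: "finite F \<Longrightarrow> (\<And>s. s \<in> F \<Longrightarrow> weight (f s)) \<Longrightarrow> weight (\<Sum>s\<in>F. f s)"
  by (induct F rule: finite_induct) (auto intro: weight_add weight_0)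

lemma vanish_on_hom:
  fixes Z :: "'a \<Rightarrow> 'a"
  assumes add: "\<And>x y. Z (x + y) = Z x + Z y"
    and h: "\<And>m a. a \<in> Am m \<Longrightarrow> Z a = 0"
  shows "Z = (\<lambda>_. 0)"
proof
  fix a
  have "Z 0 = Z 0 + Z 0" using add[of 0 0] by simp
  then have z0: "Z 0 = 0" by (simp only: add_cancel_right_right)
  have sumZ: "finite S \<Longrightarrow> Z (\<Sum>m\<in>S. f m) = (\<Sum>m\<in>S. Z (f m))" for S and f :: "('n\<Rightarrow>int) \<Rightarrow> 'a"
    by (induct S rule: finite_induct) (auto simp: z0 add)
  have "Z a = Z (\<Sum>m\<in>{m. hcomp Am a m \<noteq> 0}. hcomp Am a m)" using hcomp_sum[of a] by simp
  also have "\<dots> = (\<Sum>m\<in>{m. hcomp Am a m \<noteq> 0}. Z (hcomp Am a m))" by (rule sumZ[OF hcomp_fin])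
  also have "\<dots> = 0" using h[OF hcomp_in] by (intro sum.neutral) simp
  finally show "Z a = 0" .
qed

end

definition fext :: "('a::idom \<Rightarrow> 'a) \<Rightarrow> 'a fract \<Rightarrow> 'a fract" where
  "fext D x = (THE y. \<forall>a b. b \<noteq> 0 \<longrightarrow> x = Fract a b \<longrightarrow> y = Fract (D a * b - a * D b) (b * b))"

locale deriv_like =
  fixes D :: "'a::idom \<Rightarrow> 'a"
  assumes Dadd: "D (x + y) = D x + D y"
    and Dmul: "D (x * y) = x * D y + D x * y"
begin

lemma D1: "D 1 = 0"
proof -
  have "D 1 = D 1 + D 1" using Dmul[of 1 1] by simp
  then show ?thesis by (simp only: add_cancel_right_right)
qed

lemma fext_wd:
  assumes b: "b \<noteq> 0" and b': "b' \<noteq> 0" and eq: "Fract a b = Fract a' b'"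
  shows "Fract (D a * b - a * D b) (b * b) = Fract (D a' * b' - a' * D b') (b' * b')"
proof -
  have E1: "a * b' = a' * b" using eq b b' by (simp add: eq_fract)
  have E2: "a * D b' + D a * b' = a' * D b + D a' * b"
    using arg_cong[OF E1, of D] by (simp add: Dmul)
  have "(D a * b - a * D b) * (b' * b') = (D a' * b' - a' * D b') * (b * b)"
  proof -
    have "(D a * b - a * D b) * (b' * b') - (D a' * b' - a' * D b') * (b * b)
       = (b' * b) * ((a * D b' + D a * b') - (a' * D b + D a' * b))
         - (b * D b' + b' * D b) * (a * b' - a' * b)"
      by (simp add: algebra_simps)
    also have "\<dots> = 0" using E1 E2 by simp
    finally show ?thesis by simp
  qed
  then show ?thesis using b b' by (simp add: eq_fract)
qed

lemma fext_Fract: assumes "b \<noteq> 0" shows "fext D (Fract a b) = Fract (D a * b - a * D b) (b * b)"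
  unfolding fext_def
proof (rule the_equality)
  show "\<forall>a' b'. b' \<noteq> 0 \<longrightarrow> Fract a b = Fract a' b' \<longrightarrow>
          Fract (D a * b - a * D b) (b * b) = Fract (D a' * b' - a' * D b') (b' * b')"
    using fext_wd assms by blast
  fix y assume "\<forall>a' b'. b' \<noteq> 0 \<longrightarrow> Fract a b = Fract a' b' \<longrightarrow> y = Fract (D a' * b' - a' * D b') (b' * b')"
  then show "y = Fract (D a * b - a * D b) (b * b)" using assms by blast
qed

lemma fext_add: "fext D (x + y) = fext D x + fext D y"
proof (cases x, cases y)
  fix a b c d assume x: "x = Fract a b" "b \<noteq> 0" and y: "y = Fract c d" "d \<noteq> 0"
  show ?thesis using x y
    by (simp add: fext_Fract eq_fract Dadd Dmul algebra_simps)
qed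

lemma fext_mult: "fext D (x * y) = x * fext D y + fext D x * y"
proof (cases x, cases y)
  fix a b c d assume x: "x = Fract a b" "b \<noteq> 0" and y: "y = Fract c d" "d \<noteq> 0"
  show ?thesis using x y
    by (simp add: fext_Fract eq_fract Dadd Dmul algebra_simps)
qed

lemma fext_one: "fext D (Fract a 1) = Fract (D a) 1"
  by (simp add: fext_Fract D1)

lemma fract_ext_eq: "fract_ext D = fext D"
  unfolding fract_ext_def
proof (rule the_equality)
  show "(\<forall>x y. fext D (x + y) = fext D x + fext D y) \<and> (\<forall>x y. fext D (x * y) = x * fext D y + fext D x * y) \<and>
        (\<forall>a. fext D (Fract a 1) = Fract (D a) 1)"
    using fext_add fext_mult fext_one by blast
  fix D' :: "'a fract \<Rightarrow> 'a fract"
  assume H: "(\<forall>x y. D' (x + y) = D' x + D' y) \<and> (\<forall>x y. D' (x * y) = x * D' y + D' x * y) \<and>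
        (\<forall>a. D' (Fract a 1) = Fract (D a) 1)"
  show "D' = fext D"
  proof
    fix x show "D' x = fext D x"
    proof (cases x)
      fix a b assume x: "x = Fract a b" and b: "b \<noteq> 0"
      have ee: "Fract a 1 = Fract a b * Fract b 1" using b by (simp add: eq_fract)
      have "D' (Fract a b * Fract b 1) = Fract a b * D' (Fract b 1) + D' (Fract a b) * Fract b 1"
        using H by blast
      then have "D' (Fract a 1) = Fract a b * D' (Fract b 1) + D' (Fract a b) * Fract b 1"
        by (simp only: ee[symmetric])
      then have e: "D' x * Fract b 1 = Fract (D a) 1 - Fract a b * Fract (D b) 1"
        using H x by (simp add: algebra_simps)
      have "fext D x * Fract b 1 = Fract (D a) 1 - Fract a b * Fract (D b) 1"
        using x b by (simp add: fext_Fract eq_fract algebra_simps)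
      with e have "D' x * Fract b 1 = fext D x * Fract b 1" by simp
      moreover have "Fract b 1 \<noteq> 0" using b by (simp add: Zero_fract_def eq_fract)
      ultimately show ?thesis by simp
    qed
  qed
qed

end

lemma deriv_likeI: "is_derivation \<iota> D \<Longrightarrow> deriv_like D"
  unfolding is_derivation_def deriv_like_def by auto

lemma character_add:
  assumes "\<forall>i. t i \<noteq> 0"
  shows "character (m + m') t = character m t * character m' t"
  unfolding character_def using assms by (simp add: power_int_add prod.distrib)

lemma character_nz: "\<forall>i. t i \<noteq> 0 \<Longrightarrow> character m t \<noteq> 0"
  unfolding character_def by simp

context grad
begin

lemma tau_sum:
  assumes fin: "finite I" and hz: "\<And>i. i \<in> I \<Longrightarrow> z i \<in> Am (d i)"
  shows "torus_act \<iota> Am t (\<Sum>i\<in>I. z i) = (\<Sum>i\<in>I. \<iota> (character (d i) t) * z i)"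
proof -
  let ?c = "\<lambda>m. \<Sum>i\<in>{i\<in>I. d i = m}. z i"
  have hc: "hcomp Am (\<Sum>i\<in>I. z i) = ?c" by (rule hcomp_of_sum[OF fin hz])
  have sub: "{m. ?c m \<noteq> 0} \<subseteq> d ` I"
  proof
    fix m assume "m \<in> {m. ?c m \<noteq> 0}"
    then have "{i\<in>I. d i = m} \<noteq> {}" by (intro notI) simp
    then show "m \<in> d ` I" by auto
  qed
  have "torus_act \<iota> Am t (\<Sum>i\<in>I. z i) = (\<Sum>m\<in>{m. ?c m \<noteq> 0}. \<iota> (character m t) * ?c m)"
    unfolding torus_act_def hc ..
  also have "\<dots> = (\<Sum>m\<in>d ` I. \<iota> (character m t) * ?c m)"
    using sub fin by (intro sum.mono_neutral_left) auto
  also have "\<dots> = (\<Sum>m\<in>d ` I. \<Sum>i\<in>{i\<in>I. d i = m}. \<iota> (character (d i) t) * z i)"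
    by (rule sum.cong) (auto simp: sum_distrib_left)
  also have "\<dots> = (\<Sum>i\<in>I. \<iota> (character (d i) t) * z i)"
    using sum.image_gen[OF fin, of "\<lambda>i. \<iota> (character (d i) t) * z i" d] by simp
  finally show ?thesis .
qed

lemma tau_decomp: "torus_act \<iota> Am t a = (\<Sum>m\<in>{m. hcomp Am a m \<noteq> 0}. \<iota> (character m t) * hcomp Am a m)"
  unfolding torus_act_def ..

lemma tau_hom: "a \<in> Am m \<Longrightarrow> torus_act \<iota> Am t a = \<iota> (character m t) * a"
  using tau_sum[of "{()}" "\<lambda>_. a" "\<lambda>_. m" t] by simp

lemma tau_mult:
  assumes t: "\<forall>i. t i \<noteq> 0"
  shows "torus_act \<iota> Am t (a * b) = torus_act \<iota> Am t a * torus_act \<iota> Am t b"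
proof -
  let ?Sa = "{m. hcomp Am a m \<noteq> 0}" and ?Sb = "{m. hcomp Am b m \<noteq> 0}"
  have fa: "finite ?Sa" and fb: "finite ?Sb" using hcomp_fin by auto
  have "a * b = (\<Sum>m\<in>?Sa. hcomp Am a m) * (\<Sum>m\<in>?Sb. hcomp Am b m)"
    using hcomp_sum[of a] hcomp_sum[of b] by simp
  also have "\<dots> = (\<Sum>p\<in>?Sa \<times> ?Sb. hcomp Am a (fst p) * hcomp Am b (snd p))"
    by (simp add: sum_product sum.cartesian_product case_prod_beta)
  finally have ab: "a * b = (\<Sum>p\<in>?Sa \<times> ?Sb. hcomp Am a (fst p) * hcomp Am b (snd p))" .
  have "torus_act \<iota> Am t (a * b) =
      (\<Sum>p\<in>?Sa \<times> ?Sb. \<iota> (character (fst p + snd p) t) * (hcomp Am a (fst p) * hcomp Am b (snd p)))"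
    unfolding ab by (rule tau_sum) (use fa fb in \<open>auto intro: mult_in hcomp_in\<close>)
  also have "\<dots> = (\<Sum>p\<in>?Sa \<times> ?Sb. (\<iota> (character (fst p) t) * hcomp Am a (fst p)) *
                    (\<iota> (character (snd p) t) * hcomp Am b (snd p)))"
    by (rule sum.cong) (auto simp: character_add[OF t] iota_mult algebra_simps)
  also have "\<dots> = (\<Sum>m\<in>?Sa. \<iota> (character m t) * hcomp Am a m) * (\<Sum>m\<in>?Sb. \<iota> (character m t) * hcomp Am b m)"
    by (simp add: sum_product sum.cartesian_product case_prod_beta)
  finally show ?thesis by (simp add: tau_decomp)
qed

lemma tau_nz:
  assumes t: "\<forall>i. t i \<noteq> 0" and b: "b \<noteq> 0"
  shows "torus_act \<iota> Am t b \<noteq> 0"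
proof
  assume z: "torus_act \<iota> Am t b = 0"
  let ?Sb = "{m. hcomp Am b m \<noteq> 0}"
  have fb: "finite ?Sb" using hcomp_fin by auto
  have "?Sb \<noteq> {}"
  proof
    assume "?Sb = {}"
    then have "b = 0" using hcomp_sum[of b] by simp
    then show False using b by simp
  qed
  then obtain m where m: "hcomp Am b m \<noteq> 0" by auto
  have "hcomp Am (torus_act \<iota> Am t b) = (\<lambda>m'. \<Sum>i\<in>{i\<in>?Sb. i = m'}. \<iota> (character i t) * hcomp Am b i)"
    unfolding tau_decomp by (rule hcomp_of_sum[OF fb]) (auto intro: smult_in hcomp_in)
  then have "hcomp Am (torus_act \<iota> Am t b) m = \<iota> (character m t) * hcomp Am b m"
    using m by (simp add: Collect_conv_if)
  then have "\<iota> (character m t) * hcomp Am b m = 0" using z hcomp_zero by simp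
  then show False using m character_nz[OF t, of m] iota_eq_0 by simp
qed

lemma hom_frac_invariant:
  assumes a: "a \<in> Am m" and b: "b \<in> Am m" and b0: "b \<noteq> 0"
  shows "Fract a b \<in> invariant_field \<iota> Am"
  unfolding invariant_field_def
proof (intro CollectI allI impI)
  fix t :: "'n \<Rightarrow> 'k" and a' b'
  assume t: "\<forall>i. t i \<noteq> 0" and b': "b' \<noteq> 0" and eq: "Fract a b = Fract a' b'"
  have E: "a * b' = a' * b" using eq b0 b' by (simp add: eq_fract)
  let ?T = "torus_act \<iota> Am t" and ?c = "\<iota> (character m t)"
  have c0: "?c \<noteq> 0" using character_nz[OF t] iota_eq_0 by simp
  have "?T (a * b') = ?T (a' * b)" using E by simp
  then have "?T a * ?T b' = ?T a' * ?T b" by (simp only: tau_mult[OF t])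
  then have "?c * (a * ?T b') = ?c * (?T a' * b)" using tau_hom[OF a] tau_hom[OF b] by (simp add: algebra_simps)
  then have E2: "a * ?T b' = ?T a' * b" using c0 by simp
  have Tb: "?T b' \<noteq> 0" using tau_nz[OF t b'] .
  have "b * (?T a' * b') = b * (a' * ?T b')"
  proof -
    have "b * (?T a' * b') = b' * (?T a' * b)" by (simp add: algebra_simps)
    also have "\<dots> = b' * (a * ?T b')" using E2 by simp
    also have "\<dots> = (a * b') * ?T b'" by (simp add: algebra_simps)
    also have "\<dots> = b * (a' * ?T b')" using E by (simp add: algebra_simps)
    finally show ?thesis .
  qed
  then have "?T a' * b' = a' * ?T b'" using b0 by simp
  then have "Fract (?T a') (?T b') = Fract a' b'"
    using Tb b' by (simp add: eq_fract)
  then show "Fract (?T a') (?T b') = Fract a b" using eq by simp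
qed

lemma fiber_hom:
  assumes der: "is_derivation \<iota> D" and fib: "fiber_type \<iota> Am D"
    and a: "a \<in> Am m" and b: "b \<in> Am m" and b0: "b \<noteq> 0"
  shows "D a * b = a * D b"
proof -
  interpret deriv_like D by (rule deriv_likeI[OF der])
  have "fract_ext D (Fract a b) = 0" using fib hom_frac_invariant[OF a b b0] unfolding fiber_type_def by blast
  then have "Fract (D a * b - a * D b) (b * b) = 0" using fract_ext_eq fext_Fract[OF b0] by simp
  then have "D a * b - a * D b = 0" using b0 by (simp add: Zero_fract_def eq_fract)
  then show ?thesis by simp
qed

end

lemma of_int_fract: "(of_int z :: 'a::idom fract) = Fract (of_int z) 1"
proof -
  obtain a b where "z = int a - int b" by (metis int_diff_cases)
  then show ?thesis by (simp add: of_nat_fract)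
qed

context grad
begin

lemma of_int_fract_inj: "(of_int x :: 'a fract) = of_int y \<Longrightarrow> x = y"
proof -
  assume "(of_int x :: 'a fract) = of_int y"
  then have "(of_int x :: 'a) = of_int y" by (simp add: of_int_fract eq_fract)
  then have "(of_int (x - y) :: 'a) = 0" by simp
  then have "x - y = 0" using of_int_a_inj[of "x - y"] by blast
  then show "x = y" by simp
qed

lemma weight_intmult: "weight x \<Longrightarrow> weight (\<lambda>i. int n * x i)"
proof (induct n)
  case 0
  have e: "(\<lambda>i. int 0 * x i) = 0" by (simp add: fun_eq_iff)
  show ?case using weight_0 by (simp only: e)
next
  case (Suc n)
  have e: "(\<lambda>i. int (Suc n) * x i) = x + (\<lambda>i. int n * x i)" by (simp add: fun_eq_iff algebra_simps)
  show ?case using weight_add[OF Suc(2) Suc(1)[OF Suc(2)]] by (simp only: e)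
qed

lemma weight_lin: "finite F \<Longrightarrow> (\<And>s. s \<in> F \<Longrightarrow> weight s) \<Longrightarrow> weight (\<lambda>i. \<Sum>s\<in>F. int (k s) * s i)"
proof (induct F rule: finite_induct)
  case empty
  have e: "(\<lambda>i. \<Sum>s\<in>{}. int (k s) * s i) = 0" by (simp add: fun_eq_iff)
  show ?case using weight_0 by (simp only: e)
next
  case (insert x F)
  have e: "(\<lambda>i. \<Sum>s\<in>insert x F. int (k s) * s i) = (\<lambda>i. int (k x) * x i) + (\<lambda>i. \<Sum>s\<in>F. int (k s) * s i)"
    using insert(1,2) by (simp add: fun_eq_iff)
  show ?case using weight_add[OF weight_intmult insert(3)] insert(4) by (simp only: e) auto
qed

lemma diff_rep:
  assumes eff: "effective_grading Am"
  shows "\<exists>u v. weight u \<and> weight v \<and> m = u - v"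
proof -
  obtain F c where F: "finite F" "F \<subseteq> weights Am" and m: "m = (\<lambda>i. \<Sum>s\<in>F. c s * s i)"
    using eff unfolding effective_grading_def by blast
  let ?u = "\<lambda>i. \<Sum>s\<in>F. int (nat (c s)) * s i" and ?v = "\<lambda>i. \<Sum>s\<in>F. int (nat (- c s)) * s i"
  have w: "\<And>s. s \<in> F \<Longrightarrow> weight s" using F(2) weight_iff by auto
  have "weight ?u" "weight ?v" using weight_lin[OF F(1) w, of "\<lambda>s. nat (c s)"]
      weight_lin[OF F(1) w, of "\<lambda>s. nat (- c s)"] by simp_all
  moreover have "m = ?u - ?v"
  proof
    fix i
    have "m i = (\<Sum>s\<in>F. (int (nat (c s)) - int (nat (- c s))) * s i)"
      unfolding m by (intro sum.cong) auto
    then show "m i = (?u - ?v) i" by (simp add: sum_subtractf left_diff_distrib)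
  qed
  ultimately show ?thesis by blast
qed

end

locale lnd_data = grad \<iota> Am for \<iota> :: "'k::field_char_0 \<Rightarrow> 'a::idom" and Am :: "('n::finite \<Rightarrow> int) \<Rightarrow> 'a set" +
  fixes D :: "'a \<Rightarrow> 'a" and e :: "'n \<Rightarrow> int"
  assumes der: "is_derivation \<iota> D" and nz: "D \<noteq> (\<lambda>_. 0)" and lnd: "locally_nilpotent D"
    and hom: "homogeneous_of_degree Am D e" and fib: "fiber_type \<iota> Am D"
    and eff: "effective_grading Am"
begin

interpretation dl: deriv_like D by (rule deriv_likeI[OF der])

lemma D0: "D 0 = 0"
proof -
  have "D 0 = D 0 + D 0" using dl.Dadd[of 0 0] by simp
  then show ?thesis by (simp only: add_cancel_right_right)
qed

lemma D_hom: "a \<in> Am m \<Longrightarrow> D a \<in> Am (m + e)"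
  using hom unfolding homogeneous_of_degree_def by blast

lemma Dpow_hom: "a \<in> Am m \<Longrightarrow> (D ^^ k) a \<in> Am (m + of_nat k * e)"
proof (induct k)
  case 0 then show ?case by simp
next
  case (Suc k)
  have e: "m + of_nat (Suc k) * e = (m + of_nat k * e) + e" by (simp add: algebra_simps)
  show ?case using D_hom[OF Suc(1)[OF Suc(2)]] by (simp only: e funpow.simps comp_def)
qed

definition Psi :: "('n \<Rightarrow> int) \<Rightarrow> 'a fract" where
  "Psi m = (let a = (SOME a. a \<in> Am m \<and> a \<noteq> 0) in Fract (D a) a)"

lemma Psi_eq: assumes a: "a \<in> Am m" "a \<noteq> 0" shows "Psi m = Fract (D a) a"
proof -
  let ?b = "SOME a. a \<in> Am m \<and> a \<noteq> 0"
  have b: "?b \<in> Am m" "?b \<noteq> 0" using someI[of "\<lambda>a. a \<in> Am m \<and> a \<noteq> 0" a] a by auto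
  have "D a * ?b = a * D ?b" by (rule fiber_hom[OF der fib a(1) b(1) b(2)])
  then have "Fract (D ?b) ?b = Fract (D a) a" using a b by (simp add: eq_fract algebra_simps)
  then show ?thesis unfolding Psi_def Let_def by simp
qed

lemma D_formula: assumes a: "a \<in> Am m" shows "Fract (D a) 1 = Psi m * Fract a 1"
proof (cases "a = 0")
  case True then show ?thesis by (simp add: D0 fract_collapse)
next
  case False
  then have "Psi m * Fract a 1 = Fract (D a * a) (a * 1)" using Psi_eq[OF a False] by simp
  also have "\<dots> = Fract (D a) 1" using False mult_fract_cancel[of a "D a" 1] by (simp add: mult.commute)
  finally show ?thesis by simp
qed

lemma Psi_add: assumes "weight m" "weight m'" shows "Psi (m + m') = Psi m + Psi m'"
proof -
  obtain a a' where a: "a \<in> Am m" "a \<noteq> 0" and a': "a' \<in> Am m'" "a' \<noteq> 0"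
    using assms unfolding weight_def by blast
  have aa: "a * a' \<in> Am (m + m')" "a * a' \<noteq> 0" using a a' mult_in by auto
  show ?thesis using Psi_eq[OF aa] Psi_eq[OF a] Psi_eq[OF a'] a a'
    by (simp add: dl.Dmul eq_fract algebra_simps)
qed

lemma ex_n0: "\<exists>n. weight n \<and> weight (n + e)"
proof (rule ccontr)
  assume H: "\<not> ?thesis"
  have "D = (\<lambda>_. 0)"
  proof (rule vanish_on_hom)
    show "\<And>x y. D (x + y) = D x + D y" by (rule dl.Dadd)
    fix m a assume a: "a \<in> Am m"
    show "D a = 0"
    proof (rule ccontr)
      assume "D a \<noteq> 0"
      then have "a \<noteq> 0" using D0 by auto
      then have "weight m" "weight (m + e)" using a D_hom[OF a] \<open>D a \<noteq> 0\<close> weightI by auto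
      then show False using H by blast
    qed
  qed
  then show False using nz by simp
qed

definition n0 where "n0 = (SOME n. weight n \<and> weight (n + e))"
lemma n0: "weight n0" "weight (n0 + e)" using someI_ex[OF ex_n0] unfolding n0_def by auto

definition c where "c = Psi (n0 + e) - Psi n0"

lemma Psi_shift: assumes "weight x" "weight (x + e)" shows "Psi (x + e) = Psi x + c"
proof -
  have e1: "Psi ((x + e) + n0) = Psi (x + e) + Psi n0" by (rule Psi_add) (use assms n0 in auto)
  have e2: "Psi ((n0 + e) + x) = Psi (n0 + e) + Psi x" by (rule Psi_add) (use assms n0 in auto)
  have e3: "(x + e) + n0 = (n0 + e) + x" by (simp only: ac_simps)
  have "Psi (x + e) + Psi n0 = Psi (n0 + e) + Psi x" using e1 e2 e3 by simp
  then show ?thesis unfolding c_def by (simp add: algebra_simps)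
qed

lemma Psi_lnd: assumes m: "weight m" shows "\<exists>j::nat. Psi m = - of_nat j * c"
proof -
  obtain a where a: "a \<in> Am m" "a \<noteq> 0" using m unfolding weight_def by blast
  obtain n where n: "(D ^^ n) a = 0" using lnd unfolding locally_nilpotent_def by blast
  define k where "k = (LEAST n. (D ^^ n) a = 0)"
  have k: "(D ^^ k) a = 0" unfolding k_def using n by (rule LeastI)
  have nk: "\<And>j. j < k \<Longrightarrow> (D ^^ j) a \<noteq> 0" unfolding k_def using not_less_Least by blast
  have k0: "k \<noteq> 0"
  proof
    assume "k = 0" then show False using k a by simp
  qed
  have wj: "\<And>j. j < k \<Longrightarrow> weight (m + of_nat j * e)"
    using nk Dpow_hom[OF a(1)] weightI by blast
  have step: "\<And>j. j < k \<Longrightarrow> Psi (m + of_nat j * e) = Psi m + of_nat j * c"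
  proof -
    fix j show "j < k \<Longrightarrow> Psi (m + of_nat j * e) = Psi m + of_nat j * c"
    proof (induct j)
      case 0 then show ?case by simp
    next
      case (Suc j)
      have e: "m + of_nat (Suc j) * e = (m + of_nat j * e) + e" by (simp add: algebra_simps)
      have A: "Psi (m + of_nat (Suc j) * e) = Psi (m + of_nat j * e) + c"
      proof -
        have w1: "weight (m + of_nat j * e)" using wj Suc(2) by simp
        have "weight (m + of_nat (Suc j) * e)" using wj Suc(2) by blast
        then have w2: "weight ((m + of_nat j * e) + e)" by (simp only: e)
        show ?thesis unfolding e by (rule Psi_shift[OF w1 w2])
      qed
      have B: "Psi (m + of_nat j * e) = Psi m + of_nat j * c" using Suc(1)[OF Suc_lessD[OF Suc(2)]] .
      show ?case unfolding A B by (simp add: algebra_simps)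
    qed
  qed
  let ?b = "(D ^^ (k - 1)) a"
  have b1: "?b \<in> Am (m + of_nat (k - 1) * e)" by (rule Dpow_hom[OF a(1)])
  have b2: "?b \<noteq> 0" using nk[of "k - 1"] k0 by simp
  note b = b1 b2
  have "D ?b = 0" using k k0 by (metis Suc_pred' funpow.simps(2) comp_def neq0_conv)
  then have "Psi (m + of_nat (k - 1) * e) = 0" using Psi_eq[OF b] by (simp add: fract_collapse)
  then have "Psi m = - of_nat (k - 1) * c" using step[of "k - 1"] k0 by (simp add: algebra_simps eq_neg_iff_add_eq_0)
  then show ?thesis by blast
qed

lemma c_nz: "c \<noteq> 0"
proof
  assume c0: "c = 0"
  have "D = (\<lambda>_. 0)"
  proof (rule vanish_on_hom)
    show "\<And>x y. D (x + y) = D x + D y" by (rule dl.Dadd)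
    fix m a assume a: "a \<in> Am m"
    show "D a = 0"
    proof (cases "a = 0")
      case True then show ?thesis by (simp add: D0)
    next
      case False
      then have "weight m" using a weightI by auto
      then have "Psi m = 0" using Psi_lnd c0 by auto
      then have "Fract (D a) 1 = 0" using D_formula[OF a] by simp
      then show ?thesis by (simp add: Zero_fract_def eq_fract)
    qed
  qed
  then show False using nz by simp
qed

definition q :: "('n \<Rightarrow> int) \<Rightarrow> nat" where "q m = (SOME j. Psi m = - of_nat j * c)"

lemma q_spec: assumes w: "weight m" shows "Psi m = - of_nat (q m) * c"
  using someI_ex[OF Psi_lnd[OF w]] unfolding q_def .

lemma cancel_c: "(of_int x :: 'a fract) * c = of_int y * c \<Longrightarrow> x = y"
  using c_nz of_int_fract_inj by simp

lemma q_add: assumes "weight m" "weight m'" shows "int (q (m + m')) = int (q m) + int (q m')"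
proof -
  have "Psi (m + m') = Psi m + Psi m'" by (rule Psi_add[OF assms])
  then have "(of_int (int (q (m + m'))) :: 'a fract) * c = of_int (int (q m) + int (q m')) * c"
    using q_spec assms weight_add by (simp add: algebra_simps)
  then show ?thesis by (rule cancel_c)
qed

lemma q_shift: assumes "weight x" "weight (x + e)" shows "int (q (x + e)) = int (q x) - 1"
proof -
  have "Psi (x + e) = Psi x + c" by (rule Psi_shift[OF assms])
  then have "(of_int (int (q (x + e))) :: 'a fract) * c = of_int (int (q x) - 1) * c"
    using q_spec assms by (simp add: algebra_simps)
  then show ?thesis by (rule cancel_c)
qed

definition P :: "('n \<Rightarrow> int) \<Rightarrow> int" where
  "P m = (let uv = (SOME uv. weight (fst uv) \<and> weight (snd uv) \<and> m = fst uv - snd uv)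
          in int (q (fst uv)) - int (q (snd uv)))"

lemma q_wd: assumes "weight u" "weight v" "weight u'" "weight v'" "u - v = u' - v'"
  shows "int (q u) - int (q v) = int (q u') - int (q v')"
proof -
  have "u + v' = u' + v" using assms(5) by (simp add: fun_eq_iff algebra_simps)
  then have "int (q (u + v')) = int (q (u' + v))" by simp
  then show ?thesis using q_add assms by simp
qed

lemma P_eq: assumes "weight u" "weight v" "m = u - v" shows "P m = int (q u) - int (q v)"
proof -
  have ex: "\<exists>uv. weight (fst uv) \<and> weight (snd uv) \<and> m = fst uv - snd uv"
    using assms by (intro exI[of _ "(u, v)"]) simp
  let ?uv = "SOME uv. weight (fst uv) \<and> weight (snd uv) \<and> m = fst uv - snd uv"
  have uv: "weight (fst ?uv)" "weight (snd ?uv)" "m = fst ?uv - snd ?uv" using someI_ex[OF ex] by auto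
  show ?thesis unfolding P_def Let_def using q_wd[OF uv(1,2) assms(1,2)] uv(3) assms(3) by simp
qed

lemma P_weight: "weight m \<Longrightarrow> P m = int (q m)"
  using P_eq[of m 0 m] weight_0 q_add[of 0 0] by simp

lemma P_add: "P (x + y) = P x + P y"
proof -
  obtain u v where uv: "weight u" "weight v" "x = u - v" using diff_rep[OF eff] by blast
  obtain u' v' where uv': "weight u'" "weight v'" "y = u' - v'" using diff_rep[OF eff] by blast
  have "x + y = (u + u') - (v + v')" unfolding uv(3) uv'(3) by (simp add: fun_eq_iff)
  then have "P (x + y) = int (q (u + u')) - int (q (v + v'))"
    using P_eq weight_add uv uv' by blast
  also have "\<dots> = P x + P y" using P_eq uv uv' q_add by simp
  finally show ?thesis .
qed

lemma P_e: "P e = -1"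
proof -
  have "P e = int (q (n0 + e)) - int (q n0)" using P_eq[OF n0(2) n0(1)] by simp
  then show ?thesis using q_shift[OF n0] by simp
qed

lemma P_formula: assumes a: "a \<in> Am m" shows "Fract (D a) 1 = of_int (P m) * (- c) * Fract a 1"
proof (cases "a = 0")
  case True then show ?thesis by (simp add: D0 fract_collapse)
next
  case False
  then have w: "weight m" using a weightI by auto
  show ?thesis using D_formula[OF a] q_spec[OF w] P_weight[OF w] by simp
qed

lemma P_n0: "P n0 \<ge> 1"
proof -
  have "P (n0 + e) = P n0 - 1" using P_add P_e by simp
  moreover have "P (n0 + e) \<ge> 0" using P_weight[OF n0(2)] by simp
  ultimately show ?thesis by simp
qed

theorem lnd_structure:
  "\<exists>w P. w \<noteq> 0 \<and> (\<forall>x y. P (x + y) = P x + P y) \<and> (\<forall>m. weight m \<longrightarrow> P m \<ge> 0) \<and> P e = -1 \<and>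
     (\<forall>m a. a \<in> Am m \<longrightarrow> Fract (D a) 1 = of_int (P m) * w * Fract a 1) \<and> (\<exists>n. weight n \<and> P n \<ge> 1)"
  using c_nz P_add P_weight P_e P_formula P_n0 n0 by (intro exI[of _ "- c"] exI[of _ P]) auto

end

definition brk :: "('a::ab_group_add \<Rightarrow> 'a) \<Rightarrow> ('a \<Rightarrow> 'a) \<Rightarrow> 'a \<Rightarrow> 'a" where
  "brk X Y = (\<lambda>x. X (Y x) - Y (X x))"

context grad
begin

definition Op :: "('a \<Rightarrow> 'a) \<Rightarrow> ('n \<Rightarrow> int) \<Rightarrow> (('n \<Rightarrow> int) \<Rightarrow> int) \<Rightarrow> 'a fract \<Rightarrow> bool" where
  "Op Z d f u \<longleftrightarrow> (\<forall>m a. a \<in> Am m \<longrightarrow> Z a \<in> Am (m + d) \<and> Fract (Z a) 1 = of_int (f m) * u * Fract a 1)"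

definition lin :: "('a \<Rightarrow> 'a) \<Rightarrow> bool" where
  "lin Z \<longleftrightarrow> (\<forall>x y. Z (x + y) = Z x + Z y) \<and> (\<forall>c x. Z (\<iota> c * x) = \<iota> c * Z x)"

definition spanB :: "('a \<Rightarrow> 'a) set \<Rightarrow> ('a \<Rightarrow> 'a) set" where
  "spanB B = {Z. \<exists>c. Z = (\<lambda>x. \<Sum>b\<in>B. \<iota> (c b) * b x)}"

lemma lin_add: "lin Z \<Longrightarrow> Z (x + y) = Z x + Z y" unfolding lin_def by blast
lemma lin_smult: "lin Z \<Longrightarrow> Z (\<iota> c * x) = \<iota> c * Z x" unfolding lin_def by blast
lemma lin_0: "lin Z \<Longrightarrow> Z 0 = 0"
proof -
  assume l: "lin Z"
  have "Z 0 = Z 0 + Z 0" using lin_add[OF l, of 0 0] by simp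
  then show ?thesis by (simp only: add_cancel_right_right)
qed
lemma lin_sum: assumes "lin Z" "finite S" shows "Z (\<Sum>i\<in>S. f i) = (\<Sum>i\<in>S. Z (f i))"
  using assms(2) by (induct S rule: finite_induct) (auto simp: lin_0[OF assms(1)] lin_add[OF assms(1)])
lemma lin_neg: "lin Z \<Longrightarrow> Z (- x) = - Z x"
  using lin_smult[of Z "-1" x] by (simp add: iota_minus iota_1)
lemma lin_diff: "lin Z \<Longrightarrow> Z (x - y) = Z x - Z y"
  using lin_add[of Z x "-y"] lin_neg[of Z y] by simp

lemma lin_deriv: "is_derivation \<iota> D \<Longrightarrow> lin D"
  unfolding is_derivation_def lin_def by auto

lemma lin_brk: "lin X \<Longrightarrow> lin Y \<Longrightarrow> lin (brk X Y)"
  unfolding lin_def brk_def by (simp add: algebra_simps)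

lemma iota_sum: "finite S \<Longrightarrow> \<iota> (\<Sum>i\<in>S. f i) = (\<Sum>i\<in>S. \<iota> (f i))"
  by (induct S rule: finite_induct) (auto simp: iota_0 iota_add)

lemma lin_span: assumes "finite B" "\<And>b. b \<in> B \<Longrightarrow> lin b" "Z \<in> spanB B" shows "lin Z"
proof -
  obtain c where c: "Z = (\<lambda>x. \<Sum>b\<in>B. \<iota> (c b) * b x)" using assms(3) unfolding spanB_def by blast
  have "Z (x + y) = Z x + Z y" for x y
  proof -
    have "Z (x + y) = (\<Sum>b\<in>B. \<iota> (c b) * b x + \<iota> (c b) * b y)"
      unfolding c by (intro sum.cong refl) (simp add: lin_add[OF assms(2)] distrib_left)
    then show ?thesis unfolding c by (simp add: sum.distrib)
  qed
  moreover have "Z (\<iota> k * x) = \<iota> k * Z x" for k x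
  proof -
    have "Z (\<iota> k * x) = (\<Sum>b\<in>B. \<iota> k * (\<iota> (c b) * b x))"
      unfolding c by (intro sum.cong refl) (simp add: lin_smult[OF assms(2)] mult.left_commute)
    then show ?thesis unfolding c by (simp add: sum_distrib_left)
  qed
  ultimately show ?thesis unfolding lin_def by blast
qed

lemma span_mem: assumes "b0 \<in> B" "finite B" shows "b0 \<in> spanB B"
  unfolding spanB_def
proof (intro CollectI exI[of _ "\<lambda>b. if b = b0 then 1 else 0"] ext)
  fix x
  have "(\<Sum>b\<in>B. \<iota> (if b = b0 then 1 else 0) * b x) = (\<Sum>b\<in>B. if b = b0 then b x else 0)"
    by (rule sum.cong) (auto simp: iota_0 iota_1)
  also have "\<dots> = b0 x" using assms by (simp add: sum.delta')
  finally show "b0 x = (\<Sum>b\<in>B. \<iota> (if b = b0 then 1 else 0) * b x)" by simp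
qed

lemma span_zero: "(\<lambda>_. 0) \<in> spanB B"
  unfolding spanB_def by (intro CollectI exI[of _ "\<lambda>_. 0"]) (simp add: iota_0)

lemma span_neg: assumes "Z \<in> spanB B" shows "(\<lambda>x. - Z x) \<in> spanB B"
proof -
  obtain c where "Z = (\<lambda>x. \<Sum>b\<in>B. \<iota> (c b) * b x)" using assms unfolding spanB_def by blast
  then show ?thesis unfolding spanB_def
    by (intro CollectI exI[of _ "\<lambda>b. - c b"]) (simp add: iota_minus sum_negf)
qed

lemma span_closed:
  assumes fin: "finite B" and linB: "\<And>b. b \<in> B \<Longrightarrow> lin b"
    and g1: "D1 \<in> spanB B" and g2: "D2 \<in> spanB B"
    and br: "\<And>b b'. b \<in> B \<Longrightarrow> b' \<in> B \<Longrightarrow> brk b b' \<in> spanB B"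
  shows "lie_gen \<iota> D1 D2 \<subseteq> spanB B"
proof
  define \<gamma> where "\<gamma> b b' = (SOME c. brk b b' = (\<lambda>x. \<Sum>b''\<in>B. \<iota> (c b'') * b'' x))" for b b'
  have \<gamma>: "brk b b' = (\<lambda>x. \<Sum>b''\<in>B. \<iota> (\<gamma> b b' b'') * b'' x)" if "b \<in> B" "b' \<in> B" for b b'
  proof -
    have "\<exists>c. brk b b' = (\<lambda>x. \<Sum>b''\<in>B. \<iota> (c b'') * b'' x)" using br[OF that] unfolding spanB_def by blast
    then show ?thesis unfolding \<gamma>_def by (rule someI_ex)
  qed
  fix Z assume "Z \<in> lie_gen \<iota> D1 D2"
  then show "Z \<in> spanB B"
  proof induct
    case gen1 then show ?case by (rule g1)
  next
    case gen2 then show ?case by (rule g2)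
  next
    case (add D E)
    obtain c where c: "D = (\<lambda>x. \<Sum>b\<in>B. \<iota> (c b) * b x)" using add unfolding spanB_def by blast
    obtain c' where c': "E = (\<lambda>x. \<Sum>b\<in>B. \<iota> (c' b) * b x)" using add unfolding spanB_def by blast
    show ?case unfolding spanB_def c c'
      by (intro CollectI exI[of _ "\<lambda>b. c b + c' b"]) (simp add: iota_add sum.distrib distrib_right)
  next
    case (smult D k)
    obtain c where c: "D = (\<lambda>x. \<Sum>b\<in>B. \<iota> (c b) * b x)" using smult unfolding spanB_def by blast
    show ?case unfolding spanB_def c
      by (intro CollectI exI[of _ "\<lambda>b. k * c b"]) (simp add: iota_mult sum_distrib_left mult.assoc)
  next
    case (bracket D E)
    obtain c where c: "D = (\<lambda>x. \<Sum>b\<in>B. \<iota> (c b) * b x)" using bracket unfolding spanB_def by blast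
    obtain c' where c': "E = (\<lambda>x. \<Sum>b\<in>B. \<iota> (c' b) * b x)" using bracket unfolding spanB_def by blast
    let ?k = "\<lambda>b''. \<Sum>b\<in>B. \<Sum>b'\<in>B. c b * c' b' * \<gamma> b b' b''"
    show ?case unfolding spanB_def
    proof (intro CollectI exI[of _ ?k] ext)
      fix x
      have DE: "D (E x) = (\<Sum>b\<in>B. \<Sum>b'\<in>B. \<iota> (c b * c' b') * b (b' x))"
        unfolding c c' using fin linB
        by (simp add: lin_sum lin_smult sum_distrib_left iota_mult mult.assoc)
      have ED: "E (D x) = (\<Sum>b\<in>B. \<Sum>b'\<in>B. \<iota> (c b * c' b') * b' (b x))"
        unfolding c c' using fin linB
        by (subst sum.swap) (simp add: lin_sum lin_smult sum_distrib_left iota_mult mult.assoc mult.left_commute)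
      have "D (E x) - E (D x) = (\<Sum>b\<in>B. \<Sum>b'\<in>B. \<iota> (c b * c' b') * brk b b' x)"
        unfolding DE ED brk_def by (simp add: sum_subtractf right_diff_distrib)
      also have "\<dots> = (\<Sum>b\<in>B. \<Sum>b'\<in>B. \<iota> (c b * c' b') * (\<Sum>b''\<in>B. \<iota> (\<gamma> b b' b'') * b'' x))"
        using \<gamma> by (intro sum.cong refl) simp
      also have "\<dots> = (\<Sum>b\<in>B. \<Sum>b'\<in>B. \<Sum>b''\<in>B. \<iota> (c b * c' b' * \<gamma> b b' b'') * b'' x)"
        by (simp add: sum_distrib_left iota_mult mult.assoc)
      also have "\<dots> = (\<Sum>b\<in>B. \<Sum>b''\<in>B. \<Sum>b'\<in>B. \<iota> (c b * c' b' * \<gamma> b b' b'') * b'' x)"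
        by (rule sum.cong[OF refl], rule sum.swap)
      also have "\<dots> = (\<Sum>b''\<in>B. \<Sum>b\<in>B. \<Sum>b'\<in>B. \<iota> (c b * c' b' * \<gamma> b b' b'') * b'' x)"
        by (rule sum.swap)
      also have "\<dots> = (\<Sum>b''\<in>B. \<iota> (?k b'') * b'' x)"
        using fin by (simp add: sum_distrib_right iota_sum)
      finally show "D (E x) - E (D x) = (\<Sum>b''\<in>B. \<iota> (?k b'') * b'' x)" .
    qed
  qed
qed

end

context grad
begin

lemma Op_brk:
  assumes X: "Op X d f u" and Y: "Op Y d' g v"
    and fa: "\<And>x y. f (x + y) = f x + f y" and ga: "\<And>x y. g (x + y) = g x + g y"
  shows "Op (brk X Y) (d + d') (\<lambda>m. f d' * g m - g d * f m) (u * v)"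
  unfolding Op_def
proof (intro allI impI conjI)
  fix m a assume a: "a \<in> Am m"
  have Ya: "Y a \<in> Am (m + d')" and FYa: "Fract (Y a) 1 = of_int (g m) * v * Fract a 1"
    using Y a unfolding Op_def by auto
  have Xa: "X a \<in> Am (m + d)" and FXa: "Fract (X a) 1 = of_int (f m) * u * Fract a 1"
    using X a unfolding Op_def by auto
  have XYa: "X (Y a) \<in> Am (m + d' + d)" and FXYa: "Fract (X (Y a)) 1 = of_int (f (m + d')) * u * Fract (Y a) 1"
    using X Ya unfolding Op_def by auto
  have YXa: "Y (X a) \<in> Am (m + d + d')" and FYXa: "Fract (Y (X a)) 1 = of_int (g (m + d)) * v * Fract (X a) 1"
    using Y Xa unfolding Op_def by auto
  have e1: "m + d' + d = m + (d + d')" and e2: "m + d + d' = m + (d + d')" by (simp_all only: ac_simps)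
  show "brk X Y a \<in> Am (m + (d + d'))"
    unfolding brk_def using XYa YXa e1 e2 by (metis diff_in)
  have "Fract (brk X Y a) 1 = Fract (X (Y a)) 1 - Fract (Y (X a)) 1"
    unfolding brk_def by simp
  also have "\<dots> = of_int (f (m + d')) * u * (of_int (g m) * v * Fract a 1)
                 - of_int (g (m + d)) * v * (of_int (f m) * u * Fract a 1)"
    using FXYa FYXa FYa FXa by simp
  also have "\<dots> = of_int (f d' * g m - g d * f m) * (u * v) * Fract a 1"
    by (simp add: fa ga algebra_simps)
  finally show "Fract (brk X Y a) 1 = of_int (f d' * g m - g d * f m) * (u * v) * Fract a 1" .
qed

lemma Op_zero:
  assumes l: "lin Z" and O: "Op Z d f u" and f0: "\<And>m. f m = 0"
  shows "Z = (\<lambda>_. 0)"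
proof (rule vanish_on_hom)
  show "\<And>x y. Z (x + y) = Z x + Z y" by (rule lin_add[OF l])
  fix m a assume a: "a \<in> Am m"
  have "Fract (Z a) 1 = 0" using O a f0 unfolding Op_def by auto
  then show "Z a = 0" by (simp add: Zero_fract_def eq_fract)
qed

lemma Op_scale:
  assumes lX: "lin X" and lY: "lin Y" and OX: "Op X d f u" and OY: "Op Y d g u"
    and fg: "\<And>m. g m = \<kappa> * f m"
  shows "Y = (\<lambda>x. \<iota> (of_int \<kappa>) * X x)"
proof -
  have "(\<lambda>x. Y x - \<iota> (of_int \<kappa>) * X x) = (\<lambda>_. 0)"
  proof (rule vanish_on_hom)
    show "\<And>x y. Y (x + y) - \<iota> (of_int \<kappa>) * X (x + y) = (Y x - \<iota> (of_int \<kappa>) * X x) + (Y y - \<iota> (of_int \<kappa>) * X y)"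
      by (simp add: lin_add[OF lX] lin_add[OF lY] algebra_simps)
    fix m a assume a: "a \<in> Am m"
    have "Fract (Y a) 1 = of_int \<kappa> * Fract (X a) 1"
      using OX OY a fg unfolding Op_def by (simp add: algebra_simps)
    then have "Fract (Y a) 1 = Fract (of_int \<kappa> * X a) 1" by (simp add: of_int_fract)
    then have "Y a = of_int \<kappa> * X a" by (simp add: eq_fract)
    then show "Y a - \<iota> (of_int \<kappa>) * X a = 0" by (simp add: iota_of_int)
  qed
  then show ?thesis by (auto simp: fun_eq_iff)
qed

lemma Op_hom: "Op Z d f u \<Longrightarrow> a \<in> Am m \<Longrightarrow> Z a \<in> Am (m + d)"
  unfolding Op_def by blast

inductive_set lowset :: "(('n \<Rightarrow> int) \<Rightarrow> int) \<Rightarrow> int \<Rightarrow> 'a set" for \<phi> :: "('n \<Rightarrow> int) \<Rightarrow> int" and j :: int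
  where
  lz: "0 \<in> lowset \<phi> j"
| lh: "a \<in> Am m \<Longrightarrow> \<phi> m < j \<Longrightarrow> a \<in> lowset \<phi> j"
| ls: "x \<in> lowset \<phi> j \<Longrightarrow> y \<in> lowset \<phi> j \<Longrightarrow> x + y \<in> lowset \<phi> j"

lemma low_mono: "x \<in> lowset \<phi> j \<Longrightarrow> j \<le> j' \<Longrightarrow> x \<in> lowset \<phi> j'"
  by (induct rule: lowset.induct) (auto intro: lowset.intros)

lemma low_zero: assumes pos: "\<And>m. weight m \<Longrightarrow> \<phi> m \<ge> 0"
  shows "x \<in> lowset \<phi> j \<Longrightarrow> j \<le> 0 \<Longrightarrow> x = 0"
proof (induct rule: lowset.induct)
  case lz then show ?case by simp
next
  case (lh a m)
  show ?case
  proof (rule ccontr)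
    assume "a \<noteq> 0"
    then have "weight m" using lh weightI by auto
    then show False using pos lh by fastforce
  qed
next
  case (ls x y) then show ?case by simp
qed

lemma low_sum: "finite S \<Longrightarrow> (\<And>i. i \<in> S \<Longrightarrow> z i \<in> lowset \<phi> j) \<Longrightarrow> (\<Sum>i\<in>S. z i) \<in> lowset \<phi> j"
  by (induct S rule: finite_induct) (auto intro: lowset.intros)

lemma low_all: "\<exists>j. a \<in> lowset \<phi> j"
proof -
  let ?S = "{m. hcomp Am a m \<noteq> 0}"
  have fin: "finite ?S" by (rule hcomp_fin)
  let ?j = "(\<Sum>m\<in>?S. \<bar>\<phi> m\<bar>) + 1"
  have "(\<Sum>m\<in>?S. hcomp Am a m) \<in> lowset \<phi> ?j"
  proof (rule low_sum[OF fin])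
    fix m assume m: "m \<in> ?S"
    have "\<phi> m \<le> \<bar>\<phi> m\<bar>" by simp
    also have "\<bar>\<phi> m\<bar> \<le> (\<Sum>m\<in>?S. \<bar>\<phi> m\<bar>)" by (rule member_le_sum[OF m _ fin]) simp
    finally show "hcomp Am a m \<in> lowset \<phi> ?j" by (intro lh[OF hcomp_in]) simp
  qed
  then show ?thesis using hcomp_sum[of a] by metis
qed

lemma lnd_crit:
  assumes add: "\<And>x y. E (x + y) = E x + E y"
    and pos: "\<And>m. weight m \<Longrightarrow> \<phi> m \<ge> 0"
    and low: "\<And>m a. a \<in> Am m \<Longrightarrow> E a \<in> lowset \<phi> (\<phi> m)"
  shows "locally_nilpotent E"
  unfolding locally_nilpotent_def
proof
  fix a
  have E0: "E 0 = 0"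
  proof -
    have "E 0 = E 0 + E 0" using add[of 0 0] by simp
    then show ?thesis by (simp only: add_cancel_right_right)
  qed
  have step: "x \<in> lowset \<phi> (j + 1) \<Longrightarrow> E x \<in> lowset \<phi> j" for x j
  proof (induct x rule: lowset.induct)
    case lz then show ?case by (simp add: E0 lowset.lz)
  next
    case (lh a m) then show ?case using low[of a m] by (auto intro: low_mono)
  next
    case (ls x y) then show ?case by (simp add: add lowset.ls)
  qed
  have iter: "x \<in> lowset \<phi> j \<Longrightarrow> (E ^^ n) x \<in> lowset \<phi> (j - int n)" for x j n
  proof (induct n arbitrary: j x)
    case 0 then show ?case by simp
  next
    case (Suc n)
    have "E x \<in> lowset \<phi> (j - 1)" using step[of x "j - 1"] Suc(2) by simp
    then have "(E ^^ n) (E x) \<in> lowset \<phi> (j - 1 - int n)" by (rule Suc(1))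
    moreover have eq: "j - int (Suc n) = j - 1 - int n" by simp
    ultimately show ?case by (simp only: funpow_Suc_right comp_def eq)
  qed
  obtain j where j: "a \<in> lowset \<phi> j" using low_all by blast
  have "(E ^^ nat j) a \<in> lowset \<phi> (j - int (nat j))" by (rule iter[OF j])
  then have "(E ^^ nat j) a = 0" using low_zero[OF pos] by simp
  then show "\<exists>n. (E ^^ n) a = 0" by blast
qed

lemma lnd_span:
  fixes \<phi> :: "('n \<Rightarrow> int) \<Rightarrow> int"
  assumes fin: "finite B" and linB: "\<And>b. b \<in> B \<Longrightarrow> lin b" and Z: "Z \<in> spanB B"
    and homB: "\<And>b. b \<in> B \<Longrightarrow> \<exists>d. (\<forall>m a. a \<in> Am m \<longrightarrow> b a \<in> Am (m + d)) \<and> \<phi> d < 0"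
    and phiadd: "\<And>x y. \<phi> (x + y) = \<phi> x + \<phi> y"
    and pos: "\<And>m. weight m \<Longrightarrow> \<phi> m \<ge> 0"
  shows "locally_nilpotent Z"
proof (rule lnd_crit[where \<phi>=\<phi>])
  show "\<And>x y. Z (x + y) = Z x + Z y" using lin_span[OF fin linB Z] by (rule lin_add)
  show "\<And>m. weight m \<Longrightarrow> \<phi> m \<ge> 0" by (rule pos)
  obtain c where c: "Z = (\<lambda>x. \<Sum>b\<in>B. \<iota> (c b) * b x)" using Z unfolding spanB_def by blast
  fix m a assume a: "a \<in> Am m"
  show "Z a \<in> lowset \<phi> (\<phi> m)" unfolding c
  proof (rule low_sum[OF fin])
    fix b assume b: "b \<in> B"
    obtain d where d: "\<forall>m a. a \<in> Am m \<longrightarrow> b a \<in> Am (m + d)" "\<phi> d < 0" using homB[OF b] by blast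
    have "\<iota> (c b) * b a \<in> Am (m + d)" using d a by (auto intro: smult_in)
    moreover have "\<phi> (m + d) < \<phi> m" using d phiadd by simp
    ultimately show "\<iota> (c b) * b a \<in> lowset \<phi> (\<phi> m)" by (rule lh)
  qed
qed

end

lemma dickson_strong:
  fixes f :: "nat \<Rightarrow> 'j \<Rightarrow> nat"
  assumes "finite J"
  shows "infinite I \<Longrightarrow> \<exists>I'. I' \<subseteq> I \<and> infinite I' \<and> (\<forall>i\<in>I'. \<forall>j\<in>I'. i < j \<longrightarrow> (\<forall>x\<in>J. f i x \<le> f j x))"
  using assms
proof (induct J arbitrary: I rule: finite_induct)
  case empty then show ?case by blast
next
  case (insert x J)
  obtain I1 where I1: "I1 \<subseteq> I" "infinite I1" "\<forall>i\<in>I1. \<forall>j\<in>I1. i < j \<longrightarrow> (\<forall>y\<in>J. f i y \<le> f j y)"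
    using insert(3)[OF insert(4)] by blast
  define I' where "I' = {i \<in> I1. \<forall>j\<in>I1. i < j \<longrightarrow> f i x \<le> f j x}"
  have "infinite I'"
    unfolding infinite_nat_iff_unbounded_le
  proof
    fix N
    have "\<exists>j\<in>I1. j \<ge> N" using I1(2) unfolding infinite_nat_iff_unbounded_le by blast
    then have ex: "\<exists>v j. j \<in> I1 \<and> j \<ge> N \<and> f j x = v" by blast
    define v where "v = (LEAST v. \<exists>j. j \<in> I1 \<and> j \<ge> N \<and> f j x = v)"
    have "\<exists>j. j \<in> I1 \<and> j \<ge> N \<and> f j x = v" unfolding v_def using ex by (rule exE) (rule LeastI_ex, blast)
    then obtain i where i: "i \<in> I1" "i \<ge> N" "f i x = v" by blast
    have "i \<in> I'" unfolding I'_def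
    proof (intro CollectI conjI ballI impI)
      show "i \<in> I1" by (rule i(1))
      fix j assume j: "j \<in> I1" "i < j"
      then have "v \<le> f j x" unfolding v_def using i(2) by (intro Least_le) auto
      then show "f i x \<le> f j x" using i(3) by simp
    qed
    then show "\<exists>n\<ge>N. n \<in> I'" using i(2) by blast
  qed
  moreover have "I' \<subseteq> I" using I1(1) unfolding I'_def by auto
  moreover have "\<forall>i\<in>I'. \<forall>j\<in>I'. i < j \<longrightarrow> (\<forall>y\<in>insert x J. f i y \<le> f j y)"
    using I1(3) unfolding I'_def by auto
  ultimately show ?case by blast
qed

lemma dickson:
  fixes f :: "nat \<Rightarrow> 'j \<Rightarrow> nat"
  assumes "finite J"
  shows "\<exists>k k'. k < k' \<and> (\<forall>x\<in>J. f k x \<le> f k' x)"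
proof -
  obtain I' where I': "infinite I'" "\<forall>i\<in>I'. \<forall>j\<in>I'. i < j \<longrightarrow> (\<forall>x\<in>J. f i x \<le> f j x)"
    using dickson_strong[OF assms, where I="UNIV :: nat set" and f=f] by auto
  obtain k where k: "k \<in> I'" using I'(1) by (metis finite.emptyI ex_in_conv)
  obtain k' where k': "k' \<ge> Suc k" "k' \<in> I'" using I'(1) unfolding infinite_nat_iff_unbounded_le by blast
  show ?thesis using I'(2) k k' by (intro exI[of _ k] exI[of _ k']) auto
qed

context grad
begin

definition Mon :: "('n \<Rightarrow> int) set \<Rightarrow> ('n \<Rightarrow> int) \<Rightarrow> bool" where
  "Mon W m \<longleftrightarrow> (\<exists>N. m = (\<lambda>i. \<Sum>g\<in>W. int (N g) * g i))"

lemma Mon_0: "Mon W 0"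
  unfolding Mon_def by (intro exI[of _ "\<lambda>_. 0"]) (simp add: fun_eq_iff)

lemma Mon_add: "Mon W m \<Longrightarrow> Mon W m' \<Longrightarrow> Mon W (m + m')"
  unfolding Mon_def
proof (elim exE)
  fix N N' assume "m = (\<lambda>i. \<Sum>g\<in>W. int (N g) * g i)" "m' = (\<lambda>i. \<Sum>g\<in>W. int (N' g) * g i)"
  then show "\<exists>N. m + m' = (\<lambda>i. \<Sum>g\<in>W. int (N g) * g i)"
    by (intro exI[of _ "\<lambda>g. N g + N' g"]) (simp add: fun_eq_iff sum.distrib algebra_simps)
qed

lemma Mon_gen: "finite W \<Longrightarrow> m \<in> W \<Longrightarrow> Mon W m"
  unfolding Mon_def
proof (intro exI[of _ "\<lambda>g. if g = m then 1 else 0"] ext)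
  fix i assume "finite W" "m \<in> W"
  have "(\<Sum>g\<in>W. int (if g = m then 1 else 0) * g i) = (\<Sum>g\<in>W. if g = m then g i else 0)"
    by (rule sum.cong) auto
  then show "m i = (\<Sum>g\<in>W. int (if g = m then 1 else 0) * g i)"
    using \<open>finite W\<close> \<open>m \<in> W\<close> by (simp add: sum.delta')
qed

lemma hcomp_mult_nz:
  assumes "hcomp Am (x * y) m \<noteq> 0"
  shows "\<exists>m1 m2. hcomp Am x m1 \<noteq> 0 \<and> hcomp Am y m2 \<noteq> 0 \<and> m = m1 + m2"
proof -
  let ?Sa = "{m. hcomp Am x m \<noteq> 0}" and ?Sb = "{m. hcomp Am y m \<noteq> 0}"
  have fa: "finite ?Sa" and fb: "finite ?Sb" using hcomp_fin by auto
  have "x * y = (\<Sum>m\<in>?Sa. hcomp Am x m) * (\<Sum>m\<in>?Sb. hcomp Am y m)"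
    using hcomp_sum[of x] hcomp_sum[of y] by simp
  also have "\<dots> = (\<Sum>p\<in>?Sa \<times> ?Sb. hcomp Am x (fst p) * hcomp Am y (snd p))"
    by (simp add: sum_product sum.cartesian_product case_prod_beta)
  finally have ab: "x * y = (\<Sum>p\<in>?Sa \<times> ?Sb. hcomp Am x (fst p) * hcomp Am y (snd p))" .
  have "hcomp Am (x * y) = (\<lambda>m. \<Sum>p\<in>{p\<in>?Sa \<times> ?Sb. fst p + snd p = m}. hcomp Am x (fst p) * hcomp Am y (snd p))"
    unfolding ab by (rule hcomp_of_sum) (use fa fb in \<open>auto intro: mult_in hcomp_in\<close>)
  then have "{p\<in>?Sa \<times> ?Sb. fst p + snd p = m} \<noteq> {}" using assms by (intro notI) simp
  then show ?thesis by auto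
qed

lemma fg_weights:
  assumes fg: "finitely_generated \<iota>"
  shows "\<exists>W. finite W \<and> (\<forall>g\<in>W. weight g) \<and> (\<forall>m. weight m \<longrightarrow> Mon W m)"
proof -
  obtain G where G: "finite G" "\<forall>a. a \<in> subalg_gen \<iota> G" using fg unfolding finitely_generated_def by blast
  define W where "W = (\<Union>g\<in>G. {m. hcomp Am g m \<noteq> 0})"
  have finW: "finite W" unfolding W_def using G(1) hcomp_fin by auto
  have wW: "\<forall>g\<in>W. weight g" unfolding W_def using hcomp_in weightI by blast
  have main: "x \<in> subalg_gen \<iota> G \<Longrightarrow> (\<forall>m. hcomp Am x m \<noteq> 0 \<longrightarrow> Mon W m)" for x
  proof (induct rule: subalg_gen.induct)
    case (gen g) then show ?case using Mon_gen[OF finW] unfolding W_def by blast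
  next
    case (const c)
    show ?case
    proof (intro allI impI)
      fix m assume "hcomp Am (\<iota> c) m \<noteq> 0"
      then have m0: "m = 0" using hcomp_hom[OF iota_in[of c]] by (auto split: if_splits)
      show "Mon W m" by (simp only: m0 Mon_0)
    qed
  next
    case (add x y)
    show ?case
    proof (intro allI impI)
      fix m assume "hcomp Am (x + y) m \<noteq> 0"
      then have "hcomp Am x m \<noteq> 0 \<or> hcomp Am y m \<noteq> 0" by (auto simp: hcomp_add)
      then show "Mon W m" using add by blast
    qed
  next
    case (mult x y) then show ?case using hcomp_mult_nz Mon_add by metis
  qed
  have "\<forall>m. weight m \<longrightarrow> Mon W m"
  proof (intro allI impI)
    fix m assume "weight m"
    then obtain a where a: "a \<in> Am m" "a \<noteq> 0" unfolding weight_def by blast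
    then have "hcomp Am a m \<noteq> 0" using hcomp_hom[OF a(1)] by simp
    then show "Mon W m" using main G(2) by blast
  qed
  then show ?thesis using finW wW by blast
qed

lemma cone_crit:
  assumes fg: "finitely_generated \<iota>"
    and seq: "\<And>k::nat. weight (\<lambda>i. m0 i + int k * v i)"
  shows "v \<in> weight_cone_M Am"
proof -
  obtain W where W: "finite W" "\<forall>g\<in>W. weight g" "\<forall>m. weight m \<longrightarrow> Mon W m" using fg_weights[OF fg] by blast
  define N where "N k = (SOME N. (\<lambda>i. m0 i + int k * v i) = (\<lambda>i. \<Sum>g\<in>W. int (N g) * g i))" for k :: nat
  have N: "(\<lambda>i. m0 i + int k * v i) = (\<lambda>i. \<Sum>g\<in>W. int (N k g) * g i)" for k
  proof -
    have "Mon W (\<lambda>i. m0 i + int k * v i)" using W(3) seq by blast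
    then show ?thesis unfolding Mon_def N_def by (rule someI_ex)
  qed
  obtain k k' where kk: "k < k'" "\<forall>g\<in>W. N k g \<le> N k' g" using dickson[OF W(1), of N] by blast
  define c where "c g = (of_int (int (N k' g) - int (N k g)) / of_nat (k' - k) :: rat)" for g
  have c0: "\<forall>s\<in>W. c s \<ge> 0" using kk unfolding c_def by auto
  have eqn: "(\<lambda>i. of_int (v i)) = (\<lambda>i. \<Sum>s\<in>W. c s * of_int (s i))"
  proof
    fix i
    have e1: "m0 i + int k * v i = (\<Sum>g\<in>W. int (N k g) * g i)" using fun_cong[OF N[of k], of i] by simp
    have e2: "m0 i + int k' * v i = (\<Sum>g\<in>W. int (N k' g) * g i)" using fun_cong[OF N[of k'], of i] by simp
    have "int (k' - k) * v i = (\<Sum>g\<in>W. (int (N k' g) - int (N k g)) * g i)"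
      using e1 e2 kk(1) by (simp add: sum_subtractf left_diff_distrib of_nat_diff algebra_simps)
    then have "(of_int (int (k' - k) * v i) :: rat) = of_int (\<Sum>g\<in>W. (int (N k' g) - int (N k g)) * g i)"
      by simp
    then have "of_nat (k' - k) * (of_int (v i) :: rat) = (\<Sum>g\<in>W. of_int (int (N k' g) - int (N k g)) * of_int (g i))"
      by simp
    then have "(of_int (v i) :: rat) = (\<Sum>g\<in>W. of_int (int (N k' g) - int (N k g)) * of_int (g i)) / of_nat (k' - k)"
      using kk(1) by (simp add: field_simps)
    also have "\<dots> = (\<Sum>s\<in>W. c s * of_int (s i))"
      unfolding c_def by (simp add: sum_divide_distrib)
    finally show "(of_int (v i) :: rat) = (\<Sum>s\<in>W. c s * of_int (s i))" .
  qed
  have "W \<subseteq> weights Am" using W(2) weight_iff by auto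
  then show ?thesis unfolding weight_cone_M_def using W(1) c0 eqn by blast
qed

end

definition smul :: "nat \<Rightarrow> ('n \<Rightarrow> int) \<Rightarrow> ('n \<Rightarrow> int)" where
  "smul j x = (\<lambda>i. int j * x i)"

lemma smul_0: "smul 0 x = 0" unfolding smul_def by (simp add: fun_eq_iff)
lemma smul_Suc: "smul (Suc j) x = smul j x + x" unfolding smul_def by (simp add: fun_eq_iff algebra_simps)

lemma add_smul:
  fixes P :: "('n \<Rightarrow> int) \<Rightarrow> int"
  assumes add: "\<And>x y. P (x + y) = P x + P y"
  shows "P (smul j x) = int j * P x"
proof (induct j)
  case 0
  have "P 0 = P 0 + P 0" using add[of 0 0] by simp
  then have P0: "P 0 = 0" by simp
  show ?case by (simp only: smul_0 P0 of_nat_0 mult_zero_left)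
next
  case (Suc j)
  show ?case by (simp only: smul_Suc add Suc) (simp add: algebra_simps)
qed

lemma lie_gen_sub: "lie_gen \<iota> D1 D2 \<subseteq> lie_gen \<iota> D2 D1"
proof
  fix Z assume "Z \<in> lie_gen \<iota> D1 D2"
  then show "Z \<in> lie_gen \<iota> D2 D1"
    by induct (auto intro: lie_gen.intros)
qed

lemma lie_gen_swap: "lie_gen \<iota> D1 D2 = lie_gen \<iota> D2 D1"
  using lie_gen_sub by blast

locale two_lnd = grad \<iota> Am for \<iota> :: "'k::field_char_0 \<Rightarrow> 'a::idom" and Am :: "('n::finite \<Rightarrow> int) \<Rightarrow> 'a set" +
  fixes D1 D2 :: "'a \<Rightarrow> 'a" and e1 e2 :: "'n \<Rightarrow> int" and w1 w2 :: "'a fract"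
    and P1 P2 :: "('n \<Rightarrow> int) \<Rightarrow> int"
  assumes lin1: "lin D1" and lin2: "lin D2"
    and P1add: "\<And>x y. P1 (x + y) = P1 x + P1 y" and P2add: "\<And>x y. P2 (x + y) = P2 x + P2 y"
    and P1pos: "\<And>m. weight m \<Longrightarrow> P1 m \<ge> 0" and P2pos: "\<And>m. weight m \<Longrightarrow> P2 m \<ge> 0"
    and P1e: "P1 e1 = -1" and P2e: "P2 e2 = -1"
    and Op1: "Op D1 e1 P1 w1" and Op2: "Op D2 e2 P2 w2"
    and w1: "w1 \<noteq> 0" and w2: "w2 \<noteq> 0"
    and ex1: "\<exists>n. weight n \<and> P1 n \<ge> 1" and ex2: "\<exists>n. weight n \<and> P2 n \<ge> 1"
    and eff: "effective_grading Am"
begin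

definition s where "s = P1 e2"
definition t where "t = P2 e1"

lemma Fract_a_nz: "a \<noteq> 0 \<Longrightarrow> Fract a 1 \<noteq> 0"
  by (simp add: Zero_fract_def eq_fract)

lemma of_int_fract_nz: "z \<noteq> 0 \<Longrightarrow> (of_int z :: 'a fract) \<noteq> 0"
  using of_int_fract_inj[of z 0] by auto

lemma Op_weight:
  assumes O: "Op D e P w" and w: "w \<noteq> 0" and m: "weight m" and p: "P m \<noteq> 0"
  shows "weight (m + e)"
proof -
  obtain a where a: "a \<in> Am m" "a \<noteq> 0" using m unfolding weight_def by blast
  have Da: "D a \<in> Am (m + e)" "Fract (D a) 1 = of_int (P m) * w * Fract a 1" using O a unfolding Op_def by auto
  have "Fract (D a) 1 \<noteq> 0" using Da(2) w of_int_fract_nz[OF p] Fract_a_nz[OF a(2)] by simp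
  then have "D a \<noteq> 0" by (auto simp: fract_collapse)
  then show ?thesis using Da(1) weightI by blast
qed

lemma F1: "weight m \<Longrightarrow> P1 m \<ge> 1 \<Longrightarrow> weight (m + e1)"
  using Op_weight[OF Op1 w1] by simp
lemma F2: "weight m \<Longrightarrow> P2 m \<ge> 1 \<Longrightarrow> weight (m + e2)"
  using Op_weight[OF Op2 w2] by simp

lemma chain1: "weight m \<Longrightarrow> int j \<le> P1 m \<Longrightarrow> weight (m + smul j e1)"
proof (induct j)
  case 0
  have e: "m + smul 0 e1 = m" by (simp add: smul_0)
  show ?case using 0 by (simp only: e)
next
  case (Suc j)
  let ?m = "m + smul j e1"
  have w: "weight ?m" by (rule Suc(1)[OF Suc(2)]) (use Suc(3) in simp)
  have "P1 ?m = P1 m - int j" using P1add add_smul[OF P1add, of j e1] P1e by simp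
  then have "P1 ?m \<ge> 1" using Suc(3) by simp
  then have "weight (?m + e1)" using F1 w by blast
  moreover have "?m + e1 = m + smul (Suc j) e1" by (simp add: smul_Suc algebra_simps)
  ultimately show ?case by (simp only:)
qed

lemma chain2: "weight m \<Longrightarrow> int j \<le> P2 m \<Longrightarrow> weight (m + smul j e2)"
proof (induct j)
  case 0
  have e: "m + smul 0 e2 = m" by (simp add: smul_0)
  show ?case using 0 by (simp only: e)
next
  case (Suc j)
  let ?m = "m + smul j e2"
  have w: "weight ?m" by (rule Suc(1)[OF Suc(2)]) (use Suc(3) in simp)
  have "P2 ?m = P2 m - int j" using P2add add_smul[OF P2add, of j e2] P2e by simp
  then have "P2 ?m \<ge> 1" using Suc(3) by simp
  then have "weight (?m + e2)" using F2 w by blast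
  moreover have "?m + e2 = m + smul (Suc j) e2" by (simp add: smul_Suc algebra_simps)
  ultimately show ?case by (simp only:)
qed

lemma ineq1: assumes m: "weight m" shows "P1 m + P2 m * s \<ge> 0"
proof -
  have j: "int (nat (P2 m)) = P2 m" using P2pos[OF m] by simp
  have "weight (m + smul (nat (P2 m)) e2)" using chain2[OF m] j by simp
  then have "P1 (m + smul (nat (P2 m)) e2) \<ge> 0" by (rule P1pos)
  then show ?thesis using P1add add_smul[OF P1add, of "nat (P2 m)" e2] j unfolding s_def
    by (simp add: mult.commute)
qed

lemma ineq2: assumes m: "weight m" shows "P2 m + P1 m * t \<ge> 0"
proof -
  have j: "int (nat (P1 m)) = P1 m" using P1pos[OF m] by simp
  have "weight (m + smul (nat (P1 m)) e1)" using chain1[OF m] j by simp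
  then have "P2 (m + smul (nat (P1 m)) e1) \<ge> 0" by (rule P2pos)
  then show ?thesis using P2add add_smul[OF P2add, of "nat (P1 m)" e1] j unfolding t_def
    by (simp add: mult.commute)
qed

lemma s_neg_t_neg: assumes "s < 0" shows "t < 0"
proof (rule ccontr)
  assume "\<not> t < 0"
  then have t: "t \<ge> 0" by simp
  obtain n where n: "weight n" "P2 n \<ge> 1" using ex2 by blast
  have j: "int (nat (P1 n)) = P1 n" using P1pos[OF n(1)] by simp
  let ?m = "n + smul (nat (P1 n)) e1"
  have wm: "weight ?m" using chain1[OF n(1)] j by simp
  have P1m: "P1 ?m = 0" using P1add add_smul[OF P1add, of "nat (P1 n)" e1] j P1e by simp
  have P2m: "P2 ?m = P2 n + P1 n * t" using P2add add_smul[OF P2add, of "nat (P1 n)" e1] j unfolding t_def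
    by (simp add: mult.commute)
  have "P1 n * t \<ge> 0" using P1pos[OF n(1)] t by simp
  then have "P2 ?m \<ge> 1" using P2m n(2) by simp
  then have "weight (?m + e2)" using F2 wm by blast
  then have "P1 (?m + e2) \<ge> 0" by (rule P1pos)
  then show False using P1add P1m assms unfolding s_def by simp
qed

lemma t_neg_s_neg: assumes "t < 0" shows "s < 0"
proof (rule ccontr)
  assume "\<not> s < 0"
  then have s: "s \<ge> 0" by simp
  obtain n where n: "weight n" "P1 n \<ge> 1" using ex1 by blast
  have j: "int (nat (P2 n)) = P2 n" using P2pos[OF n(1)] by simp
  let ?m = "n + smul (nat (P2 n)) e2"
  have wm: "weight ?m" using chain2[OF n(1)] j by simp
  have P2m: "P2 ?m = 0" using P2add add_smul[OF P2add, of "nat (P2 n)" e2] j P2e by simp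
  have P1m: "P1 ?m = P1 n + P2 n * s" using P1add add_smul[OF P1add, of "nat (P2 n)" e2] j unfolding s_def
    by (simp add: mult.commute)
  have "P2 n * s \<ge> 0" using P2pos[OF n(1)] s by simp
  then have "P1 ?m \<ge> 1" using P1m n(2) by simp
  then have "weight (?m + e1)" using F1 wm by blast
  then have "P2 (?m + e1) \<ge> 0" by (rule P2pos)
  then show False using P2add P2m assms unfolding t_def by simp
qed

lemma case_neg: assumes s: "s < 0" and t: "t < 0" shows "P1 = P2"
proof -
  have w: "P1 m = P2 m" if m: "weight m" for m
  proof -
    have a: "P1 m + P2 m * s \<ge> 0" "P2 m + P1 m * t \<ge> 0" using ineq1[OF m] ineq2[OF m] by auto
    have p: "P1 m \<ge> 0" "P2 m \<ge> 0" using P1pos[OF m] P2pos[OF m] by auto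
    have "P2 m * s \<le> P2 m * (-1)" using p s by (intro mult_left_mono) auto
    moreover have "P1 m * t \<le> P1 m * (-1)" using p t by (intro mult_left_mono) auto
    ultimately show ?thesis using a by simp
  qed
  show ?thesis
  proof
    fix x
    obtain u v where uv: "weight u" "weight v" "x = u - v" using diff_rep[OF eff] by blast
    have "u = x + v" using uv(3) by simp
    then have "P1 u = P1 x + P1 v" "P2 u = P2 x + P2 v" using P1add P2add by simp_all
    then show "P1 x = P2 x" using w[OF uv(1)] w[OF uv(2)] by simp
  qed
qed

lemma case_pos:
  assumes s: "s \<ge> 1" and t: "t \<ge> 1" and fg: "finitely_generated \<iota>"
  shows "e1 + e2 \<in> weight_cone_M Am"
proof -
  obtain n where n: "weight n" "P2 n \<ge> 1" using ex2 by blast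
  have seq: "weight (n + smul k (e1 + e2)) \<and> P2 (n + smul k (e1 + e2)) \<ge> 1" for k
  proof (induct k)
    case 0
    show ?case using n by (simp add: smul_0)
  next
    case (Suc k)
    let ?m = "n + smul k (e1 + e2)"
    have w2: "weight (?m + e2)" using F2 Suc by blast
    have "P1 (?m + e2) = P1 ?m + s" using P1add unfolding s_def by simp
    then have "P1 (?m + e2) \<ge> 1" using P1pos[of ?m] Suc s by simp
    then have w12: "weight (?m + e2 + e1)" using F1 w2 by blast
    have e: "?m + e2 + e1 = n + smul (Suc k) (e1 + e2)" by (simp add: smul_Suc algebra_simps)
    have "P2 (?m + e2 + e1) = P2 ?m - 1 + t" using P2add P2e unfolding t_def by simp
    moreover have "P2 ?m \<ge> 1" using Suc by blast
    ultimately have "P2 (?m + e2 + e1) \<ge> 1" using t by linarith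
    then show ?case using w12 e by (simp only:)
  qed
  have "weight (\<lambda>i. n i + int k * (e1 + e2) i)" for k
  proof -
    have "(\<lambda>i. n i + int k * (e1 + e2) i) = n + smul k (e1 + e2)" by (simp add: smul_def fun_eq_iff)
    then show ?thesis using seq by simp
  qed
  then show ?thesis by (rule cone_crit[OF fg])
qed

end

context grad
begin

lemma Op_cong: "Op Z d f u \<Longrightarrow> d = d' \<Longrightarrow> (\<And>m. f m = f' m) \<Longrightarrow> u = u' \<Longrightarrow> Op Z d' f' u'"
  unfolding Op_def by simp

lemma brk_anti: "brk X Y = (\<lambda>x. - brk Y X x)"
  unfolding brk_def by simp

lemma brk_self: "brk X X = (\<lambda>_. 0)"
  unfolding brk_def by simp

end

context two_lnd
begin

lemma caseA:
  assumes eq: "P1 = P2"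
  shows "finite_dim_k \<iota> (lie_gen \<iota> D1 D2) \<and> (\<forall>D\<in>lie_gen \<iota> D1 D2. locally_nilpotent D)"
proof -
  have z12: "brk D1 D2 = (\<lambda>_. 0)"
  proof (rule Op_zero[OF lin_brk[OF lin1 lin2] Op_brk[OF Op1 Op2 P1add P2add]])
    fix m show "P1 e2 * P2 m - P2 e1 * P1 m = 0" using eq P1e P2e by simp
  qed
  have z21: "brk D2 D1 = (\<lambda>_. 0)" using z12 brk_anti[of D2 D1] by simp
  let ?B = "{D1, D2}"
  have fin: "finite ?B" by simp
  have linB: "\<And>b. b \<in> ?B \<Longrightarrow> lin b" using lin1 lin2 by auto
  have sub: "lie_gen \<iota> D1 D2 \<subseteq> spanB ?B"
  proof (rule span_closed[OF fin linB])
    show "D1 \<in> spanB ?B" "D2 \<in> spanB ?B" by (auto intro: span_mem)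
    fix b b' assume "b \<in> ?B" "b' \<in> ?B"
    then have "brk b b' = (\<lambda>_. 0)" using z12 z21 brk_self by auto
    then show "brk b b' \<in> spanB ?B" using span_zero by simp
  qed
  have "finite_dim_k \<iota> (lie_gen \<iota> D1 D2)"
    unfolding finite_dim_k_def
    using fin sub lie_gen.gen1 lie_gen.gen2 unfolding spanB_def by (intro exI[of _ ?B]) blast
  moreover have "\<forall>D\<in>lie_gen \<iota> D1 D2. locally_nilpotent D"
  proof
    fix D assume "D \<in> lie_gen \<iota> D1 D2"
    then have D: "D \<in> spanB ?B" using sub by blast
    show "locally_nilpotent D"
    proof (rule lnd_span[OF fin linB D _ P1add P1pos])
      fix b assume "b \<in> ?B"
      then show "\<exists>d. (\<forall>m a. a \<in> Am m \<longrightarrow> b a \<in> Am (m + d)) \<and> P1 d < 0"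
      proof
        assume "b = D1" then show ?thesis using Op_hom[OF Op1] P1e by (intro exI[of _ e1]) auto
      next
        assume "b \<in> {D2}" then show ?thesis using Op_hom[OF Op2] P2e eq by (intro exI[of _ e2]) auto
      qed
    qed
  qed
  ultimately show ?thesis by blast
qed

primrec Zs :: "nat \<Rightarrow> 'a \<Rightarrow> 'a" where
  "Zs 0 = D2"
| "Zs (Suc n) = brk D1 (Zs n)"

primrec kap :: "nat \<Rightarrow> int" where
  "kap 0 = 1"
| "kap (Suc n) = (s - int n) * kap n"

lemma linZ: "lin (Zs n)"
  by (induct n) (auto intro: lin_brk lin1 lin2)

lemma ZinL: "Zs n \<in> lie_gen \<iota> D1 D2"
  by (induct n) (auto simp: brk_def intro: lie_gen.intros)

lemma P1_deg: "P1 (smul n e1 + e2) = s - int n"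
  using P1add add_smul[OF P1add, of n e1] P1e unfolding s_def by simp

lemma P2_deg: "t = 0 \<Longrightarrow> P2 (smul n e1 + e2) = -1"
  using P2add add_smul[OF P2add, of n e1] P2e unfolding t_def by simp

lemma kadd: "(\<lambda>m. k * P2 m) (x + y) = (\<lambda>m. k * P2 m) x + (\<lambda>m. k * P2 m) y"
  by (simp add: P2add distrib_left)

lemma OpZ: assumes t0: "t = 0"
  shows "Op (Zs n) (smul n e1 + e2) (\<lambda>m. kap n * P2 m) (w1 ^ n * w2)"
proof (induct n)
  case 0 show ?case using Op2 by (simp add: smul_0)
next
  case (Suc n)
  have "Op (brk D1 (Zs n)) (e1 + (smul n e1 + e2))
     (\<lambda>m. P1 (smul n e1 + e2) * (kap n * P2 m) - kap n * P2 e1 * P1 m) (w1 * (w1 ^ n * w2))"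
    by (rule Op_brk[OF Op1 Suc P1add kadd])
  then show ?case unfolding Zs.simps(2)
  proof (rule Op_cong)
    show "e1 + (smul n e1 + e2) = smul (Suc n) e1 + e2" by (simp add: smul_Suc algebra_simps)
    fix m show "P1 (smul n e1 + e2) * (kap n * P2 m) - kap n * P2 e1 * P1 m = kap (Suc n) * P2 m"
      using P1_deg t0 unfolding t_def by simp
  qed simp
qed

lemma kap_zero: assumes s0: "s \<ge> 0" shows "n > nat s \<Longrightarrow> kap n = 0"
proof (induct n)
  case 0 then show ?case by simp
next
  case (Suc n)
  show ?case
  proof (cases "n = nat s")
    case True then show ?thesis using s0 by simp
  next
    case False then have "n > nat s" using Suc(2) by simp
    then show ?thesis using Suc(1) by simp
  qed
qed

lemma caseT0:
  assumes t0: "t = 0" and s0: "s \<ge> 0"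
  shows "finite_dim_k \<iota> (lie_gen \<iota> D1 D2) \<and> (\<forall>D\<in>lie_gen \<iota> D1 D2. locally_nilpotent D)"
proof -
  define N where "N = Suc (nat s)"
  let ?B = "insert D1 (Zs ` {0..N})"
  have fin: "finite ?B" by simp
  have linB: "\<And>b. b \<in> ?B \<Longrightarrow> lin b" using lin1 linZ by auto
  have Zzero: "n > nat s \<Longrightarrow> Zs n = (\<lambda>_. 0)" for n
    by (rule Op_zero[OF linZ OpZ[OF t0]]) (simp add: kap_zero[OF s0])
  have ZZ: "brk (Zs a) (Zs b) = (\<lambda>_. 0)" for a b
  proof (rule Op_zero[OF lin_brk[OF linZ linZ] Op_brk[OF OpZ[OF t0] OpZ[OF t0] kadd kadd]])
    fix m show "kap a * P2 (smul b e1 + e2) * (kap b * P2 m) - kap b * P2 (smul a e1 + e2) * (kap a * P2 m) = 0"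
      using P2_deg[OF t0] by simp
  qed
  have D1Z: "brk D1 (Zs a) \<in> spanB ?B" if "a \<le> N" for a
  proof (cases "Suc a \<le> N")
    case True
    have "Zs (Suc a) \<in> Zs ` {0..N}" by (rule imageI) (use True in simp)
    then have "Zs (Suc a) \<in> spanB ?B" using span_mem[OF _ fin] by blast
    then show ?thesis by (simp only: Zs.simps(2))
  next
    case False
    then have "Suc a > nat s" unfolding N_def by simp
    then have "Zs (Suc a) = (\<lambda>_. 0)" by (rule Zzero)
    then show ?thesis using span_zero by simp
  qed
  have sub: "lie_gen \<iota> D1 D2 \<subseteq> spanB ?B"
  proof (rule span_closed[OF fin linB])
    show "D1 \<in> spanB ?B" by (rule span_mem) auto
    have "Zs 0 \<in> Zs ` {0..N}" by (rule imageI) simp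
    then have "Zs 0 \<in> spanB ?B" using span_mem[OF _ fin] by blast
    then show "D2 \<in> spanB ?B" by (simp only: Zs.simps(1))
    fix b b' assume b: "b \<in> ?B" and b': "b' \<in> ?B"
    show "brk b b' \<in> spanB ?B"
    proof (cases "b = D1")
      case True
      show ?thesis
      proof (cases "b' = D1")
        case True
        have "brk D1 D1 = (\<lambda>_. 0)" by (rule brk_self)
        then show ?thesis using \<open>b = D1\<close> True span_zero by simp
      next
        case False
        then obtain a where "a \<le> N" "b' = Zs a" using b' by auto
        then show ?thesis using D1Z \<open>b = D1\<close> by simp
      qed
    next
      case False
      then obtain a where a: "a \<le> N" "b = Zs a" using b by auto
      show ?thesis
      proof (cases "b' = D1")
        case True
        have "brk b b' = (\<lambda>x. - brk D1 (Zs a) x)" using a True brk_anti by simp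
        then show ?thesis using span_neg[OF D1Z[OF a(1)]] by simp
      next
        case False
        then obtain c where "b' = Zs c" using b' by auto
        then show ?thesis using a ZZ span_zero by simp
      qed
    qed
  qed
  have "finite_dim_k \<iota> (lie_gen \<iota> D1 D2)"
    unfolding finite_dim_k_def
  proof (intro exI[of _ ?B] conjI)
    show "finite ?B" by (rule fin)
    show "?B \<subseteq> lie_gen \<iota> D1 D2" using ZinL lie_gen.gen1 by auto
    show "\<forall>D\<in>lie_gen \<iota> D1 D2. \<exists>c. D = (\<lambda>x. \<Sum>b\<in>?B. \<iota> (c b) * b x)" using sub unfolding spanB_def by blast
  qed
  moreover have "\<forall>D\<in>lie_gen \<iota> D1 D2. locally_nilpotent D"
  proof
    fix D assume "D \<in> lie_gen \<iota> D1 D2"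
    then have D: "D \<in> spanB ?B" using sub by blast
    let ?\<phi> = "\<lambda>m. P1 m + (s + 1) * P2 m"
    have phiadd: "\<And>x y. ?\<phi> (x + y) = ?\<phi> x + ?\<phi> y" by (simp add: P1add P2add algebra_simps)
    have pos: "\<And>m. weight m \<Longrightarrow> ?\<phi> m \<ge> 0" using P1pos P2pos s0 by simp
    show "locally_nilpotent D"
    proof (rule lnd_span[OF fin linB D _ phiadd pos])
      fix b assume "b \<in> ?B"
      then show "\<exists>d. (\<forall>m a. a \<in> Am m \<longrightarrow> b a \<in> Am (m + d)) \<and> ?\<phi> d < 0"
      proof
        assume "b = D1" then show ?thesis using Op_hom[OF Op1] P1e t0 unfolding t_def
          by (intro exI[of _ e1]) auto
      next
        assume "b \<in> Zs ` {0..N}"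
        then obtain a where a: "b = Zs a" by auto
        show ?thesis using Op_hom[OF OpZ[OF t0, of a]] P1_deg[of a] P2_deg[OF t0, of a] a
          by (intro exI[of _ "smul a e1 + e2"]) auto
      qed
    qed
  qed
  ultimately show ?thesis by blast
qed

end

theorem corollary6p2:
  fixes \<iota> :: "'k::field_char_0 \<Rightarrow> 'a::idom"
    and Am :: "('n::finite \<Rightarrow> int) \<Rightarrow> 'a set"
    and D1 D2 :: "'a \<Rightarrow> 'a"
    and e1 e2 :: "'n \<Rightarrow> int"
  assumes "alg_closed_field TYPE('k)"
    and "k_algebra_map \<iota>"
    and "finitely_generated \<iota>"
    and "integrally_closed TYPE('a)"
    and "M_graded \<iota> Am"
    and "effective_grading Am"
    and "is_derivation \<iota> D1" and "is_derivation \<iota> D2"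
    and "D1 \<noteq> (\<lambda>_. 0)" and "D2 \<noteq> (\<lambda>_. 0)"
    and "locally_nilpotent D1" and "locally_nilpotent D2"
    and "homogeneous_of_degree Am D1 e1" and "homogeneous_of_degree Am D2 e2"
    and "fiber_type \<iota> Am D1" and "fiber_type \<iota> Am D2"
    and "e1 + e2 \<notin> weight_cone_M Am"
  shows "finite_dim_k \<iota> (lie_gen \<iota> D1 D2) \<and> (\<forall>D\<in>lie_gen \<iota> D1 D2. locally_nilpotent D)"
proof -
  interpret grad \<iota> Am by unfold_locales (use assms in auto)
  interpret L1: lnd_data \<iota> Am D1 e1 by unfold_locales (use assms in auto)
  interpret L2: lnd_data \<iota> Am D2 e2 by unfold_locales (use assms in auto)
  obtain w1 P1 where S1: "w1 \<noteq> 0" "\<forall>x y. P1 (x + y) = P1 x + P1 y" "\<forall>m. weight m \<longrightarrow> P1 m \<ge> 0" "P1 e1 = -1"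
      "\<forall>m a. a \<in> Am m \<longrightarrow> Fract (D1 a) 1 = of_int (P1 m) * w1 * Fract a 1" "\<exists>n. weight n \<and> P1 n \<ge> 1"
    using L1.lnd_structure by blast
  obtain w2 P2 where S2: "w2 \<noteq> 0" "\<forall>x y. P2 (x + y) = P2 x + P2 y" "\<forall>m. weight m \<longrightarrow> P2 m \<ge> 0" "P2 e2 = -1"
      "\<forall>m a. a \<in> Am m \<longrightarrow> Fract (D2 a) 1 = of_int (P2 m) * w2 * Fract a 1" "\<exists>n. weight n \<and> P2 n \<ge> 1"
    using L2.lnd_structure by blast
  have Op1: "Op D1 e1 P1 w1" unfolding Op_def using S1(5) L1.D_hom by blast
  have Op2: "Op D2 e2 P2 w2" unfolding Op_def using S2(5) L2.D_hom by blast
  have lin1: "lin D1" and lin2: "lin D2" using assms(7,8) lin_deriv by auto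
  interpret T: two_lnd \<iota> Am D1 D2 e1 e2 w1 w2 P1 P2
    by unfold_locales (use S1 S2 Op1 Op2 lin1 lin2 assms(6) in auto)
  interpret T': two_lnd \<iota> Am D2 D1 e2 e1 w2 w1 P2 P1
    by unfold_locales (use S1 S2 Op1 Op2 lin1 lin2 assms(6) in auto)
  have sw: "lie_gen \<iota> D2 D1 = lie_gen \<iota> D1 D2" by (rule lie_gen_swap)
  show ?thesis
  proof (cases "T.s < 0 \<or> T.t < 0")
    case True
    then have "T.s < 0" "T.t < 0" using T.s_neg_t_neg T.t_neg_s_neg by auto
    then have "P1 = P2" by (rule T.case_neg)
    then show ?thesis by (rule T.caseA)
  next
    case False
    then have s0: "T.s \<ge> 0" and t0: "T.t \<ge> 0" by auto
    have "\<not> (T.s \<ge> 1 \<and> T.t \<ge> 1)" using T.case_pos assms(3) assms(17) by blast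
    then have "T.s = 0 \<or> T.t = 0" using s0 t0 by auto
    then show ?thesis
    proof
      assume "T.t = 0"
      then show ?thesis by (rule T.caseT0[OF _ s0])
    next
      assume s: "T.s = 0"
      have "T'.t = 0" using s unfolding T'.t_def T.s_def .
      moreover have "T'.s \<ge> 0" using t0 unfolding T'.s_def T.t_def .
      ultimately have "finite_dim_k \<iota> (lie_gen \<iota> D2 D1) \<and> (\<forall>D\<in>lie_gen \<iota> D2 D1. locally_nilpotent D)"
        by (rule T'.caseT0)
      then show ?thesis unfolding sw .
    qed
  qed
qed

end
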